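(* There is $L>0$ independent of $(x,n,\mu)$ such that $0\le V^N(x,n,\mu)\le L(1+x)$ for all $n\in\{0,\dots,N\}$, $\mu\in[\mu_m,\mu_M]$ and $x\in(0,\infty)$.
   Context: Let $(\Omega,\mathcal G,\mathsf P)$ support a standard Brownian motion $(B_t)_{t\ge0}$ and, independent of it, the mortality process described below. Fix $\theta>0$, $\alpha\ge0$, $\sigma>0$, $\rho>0$, $\nu\in[0,1]$, $K\in\mathbb R$, $\hat\rho>0$, $0<\mu_m\le\mu_M<\infty$, $\hat\mu\in[\mu_m,\mu_M]$, and assume $\theta-\alpha-\rho-\mu_m<0$. For $x>0$, $X_t=x\exp((\theta-\alpha-\sigma^2/2)t+\sigma B_t)$ solves $dX_t=(\theta-\alpha)X_tdt+\sigma X_tdB_t$, $X_0=x$. Mortality: fix $N\in\mathbb N_0$, rates $\lambda_1,\dots,\lambda_N\ge0$, set $\lambda_n=0$ for $n\ge N+1$, and for $n\le N-1$, $\mu\in[\mu_m,\mu_M]$ let $q(n,\mu,\cdot)$ be a Borel probability measure on $[\mu_m,\mu_M]$, measurable in $\mu$. The process $(n_t,\mu_t)$ started at $(n,\mu)$ stays at $(n,\mu)$ for an exponential time $\xi$ of rate $\lambda_{n+1}$ ($\xi=\infty$ if the rate is $0$), then jumps to $(n+1,Z)$ with $Z\sim q(n,\mu,\cdot)$ independent of $\xi$, and then evolves in the same way. Let $\mathbb F$ be the augmented filtration generated by $B$ and $(n_t,\mu_t)$, $\mathcal T(\mathbb F)$ its stopping times with values in $[0,\infty]$ (terms discounted at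 $\tau$ are $0$ on $\{\tau=\infty\}$), and $\mathsf E_{x,n,\mu}$ the expectation with $X_0=x$, $(n_0,\mu_0)=(n,\mu)$. Define $\hat f(n,\mu):=(\hat\rho+\hat\mu)\mathsf E_{n,\mu}[\int_0^\infty e^{-\rho u-\int_0^u\mu_sds}du]$ and $$V^N(x,n,\mu):=\sup_{\tau\in\mathcal T(\mathbb F)}\mathsf E_{x,n,\mu}\Big[\int_0^\tau e^{-\int_0^t(\rho+\mu_s)ds}(\alpha+\nu\mu_t)X_tdt+e^{-\int_0^\tau(\rho+\mu_s)ds}\hat f(n_\tau,\mu_\tau)(X_\tau-K)\Big].$$ *)

theory Defs
  imports "HOL-Probability.Probability"
begin

definition std_brownian_motion :: "'a measure \<Rightarrow> (real \<Rightarrow> 'a \<Rightarrow> real) \<Rightarrow> bool" where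
  "std_brownian_motion M B \<longleftrightarrow>
     (\<forall>t\<ge>0. B t \<in> borel_measurable M) \<and>
     (\<forall>\<omega>\<in>space M. B 0 \<omega> = 0 \<and> continuous_on {0..} (\<lambda>t. B t \<omega>)) \<and>
     (\<forall>s t. 0 \<le> s \<longrightarrow> s < t \<longrightarrow>
        distributed M lborel (\<lambda>\<omega>. B t \<omega> - B s \<omega>) (normal_density 0 (sqrt (t - s)))) \<and>
     (\<forall>ts. sorted_wrt (<) ts \<longrightarrow> (\<forall>t\<in>set ts. 0 \<le> t) \<longrightarrow>
        prob_space.indep_vars M (\<lambda>_. borel) (\<lambda>i \<omega>. B (ts ! Suc i) \<omega> - B (ts ! i) \<omega>)
          {..<length ts - 1})"

text \<open>Quantile function of a probability measure on the reals; if U is uniform on (0,1),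
  then quantile Q U has law Q.\<close>

definition quantile :: "real measure \<Rightarrow> real \<Rightarrow> real" where
  "quantile Q u = Inf {z. u \<le> measure Q {..z}}"

text \<open>Marks: the value of mu after k jumps, started at (n0, mu0); the k-th new value is drawn
  from q(n0+k, previous value, .) using the independent uniform U k.\<close>

fun chain_mark :: "(nat \<Rightarrow> real \<Rightarrow> real measure) \<Rightarrow> (nat \<Rightarrow> 'a \<Rightarrow> real)
    \<Rightarrow> nat \<Rightarrow> real \<Rightarrow> nat \<Rightarrow> 'a \<Rightarrow> real" where
  "chain_mark q U n0 mu0 0 \<omega> = mu0"
| "chain_mark q U n0 mu0 (Suc k) \<omega> = quantile (q (n0 + k) (chain_mark q U n0 mu0 k \<omega>)) (U k \<omega>)"

text \<open>Holding time in the k-th visited state (n0+k): exponential of rate lambda_(n0+k+1),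
  obtained as E_k / lambda with E_k standard exponential; infinite if the rate is 0.\<close>

definition hold_time :: "(nat \<Rightarrow> real) \<Rightarrow> (nat \<Rightarrow> 'a \<Rightarrow> real) \<Rightarrow> nat \<Rightarrow> nat \<Rightarrow> 'a \<Rightarrow> ennreal" where
  "hold_time lam E n0 k \<omega> =
     (if lam (n0 + k + 1) = 0 then \<infinity> else ennreal (E k \<omega> / lam (n0 + k + 1)))"

definition jump_time :: "(nat \<Rightarrow> real) \<Rightarrow> (nat \<Rightarrow> 'a \<Rightarrow> real) \<Rightarrow> nat \<Rightarrow> nat \<Rightarrow> 'a \<Rightarrow> ennreal" where
  "jump_time lam E n0 k \<omega> = (\<Sum>j<k. hold_time lam E n0 j \<omega>)"

definition jump_count :: "(nat \<Rightarrow> real) \<Rightarrow> (nat \<Rightarrow> 'a \<Rightarrow> real) \<Rightarrow> nat \<Rightarrow> real \<Rightarrow> 'a \<Rightarrow> nat" where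
  "jump_count lam E n0 t \<omega> = card {k. jump_time lam E n0 (Suc k) \<omega> \<le> ennreal t}"

definition chain_n :: "(nat \<Rightarrow> real) \<Rightarrow> (nat \<Rightarrow> 'a \<Rightarrow> real) \<Rightarrow> nat \<Rightarrow> real \<Rightarrow> 'a \<Rightarrow> nat" where
  "chain_n lam E n0 t \<omega> = n0 + jump_count lam E n0 t \<omega>"

definition chain_mu :: "(nat \<Rightarrow> real) \<Rightarrow> (nat \<Rightarrow> real \<Rightarrow> real measure) \<Rightarrow> (nat \<Rightarrow> 'a \<Rightarrow> real)
    \<Rightarrow> (nat \<Rightarrow> 'a \<Rightarrow> real) \<Rightarrow> nat \<Rightarrow> real \<Rightarrow> real \<Rightarrow> 'a \<Rightarrow> real" where
  "chain_mu lam q E U n0 mu0 t \<omega> = chain_mark q U n0 mu0 (jump_count lam E n0 t \<omega>) \<omega>"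

definition aug_filtration :: "'a measure \<Rightarrow> (real \<Rightarrow> 'a \<Rightarrow> real) \<Rightarrow> (real \<Rightarrow> 'a \<Rightarrow> nat)
    \<Rightarrow> (real \<Rightarrow> 'a \<Rightarrow> real) \<Rightarrow> ennreal \<Rightarrow> 'a measure" where
  "aug_filtration M B Np Mp t = sigma (space M)
     ({B s -` A \<inter> space M | s A. 0 \<le> s \<and> ennreal s \<le> t \<and> A \<in> sets borel}
      \<union> {Np s -` A \<inter> space M | s A. 0 \<le> s \<and> ennreal s \<le> t}
      \<union> {Mp s -` A \<inter> space M | s A. 0 \<le> s \<and> ennreal s \<le> t \<and> A \<in> sets borel}
      \<union> null_sets (completion M))"

definition gbm :: "real \<Rightarrow> real \<Rightarrow> real \<Rightarrow> real \<Rightarrow> (real \<Rightarrow> 'a \<Rightarrow> real) \<Rightarrow> real \<Rightarrow> 'a \<Rightarrow> real" where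
  "gbm \<theta> \<alpha> \<sigma> x B t \<omega> = x * exp ((\<theta> - \<alpha> - \<sigma>\<^sup>2 / 2) * t + \<sigma> * B t \<omega>)"

definition discount :: "real \<Rightarrow> (real \<Rightarrow> 'a \<Rightarrow> real) \<Rightarrow> real \<Rightarrow> 'a \<Rightarrow> real" where
  "discount \<rho> Mp t \<omega> = exp (- (\<rho> * t + set_lebesgue_integral lborel {0..t} (\<lambda>s. Mp s \<omega>)))"

definition fhat :: "'a measure \<Rightarrow> (nat \<Rightarrow> real) \<Rightarrow> (nat \<Rightarrow> real \<Rightarrow> real measure)
    \<Rightarrow> (nat \<Rightarrow> 'a \<Rightarrow> real) \<Rightarrow> (nat \<Rightarrow> 'a \<Rightarrow> real) \<Rightarrow> real \<Rightarrow> real \<Rightarrow> real \<Rightarrow> nat \<Rightarrow> real \<Rightarrow> real" where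
  "fhat M lam q E U \<rho> \<rho>h \<mu>h n \<mu> = (\<rho>h + \<mu>h) *
     (\<integral>\<omega>. set_lebesgue_integral lborel {0..} (\<lambda>u. discount \<rho> (chain_mu lam q E U n \<mu>) u \<omega>) \<partial>M)"

definition value_fn :: "'a measure \<Rightarrow> (real \<Rightarrow> 'a \<Rightarrow> real) \<Rightarrow> (nat \<Rightarrow> 'a \<Rightarrow> real) \<Rightarrow> (nat \<Rightarrow> 'a \<Rightarrow> real)
    \<Rightarrow> (nat \<Rightarrow> real) \<Rightarrow> (nat \<Rightarrow> real \<Rightarrow> real measure)
    \<Rightarrow> real \<Rightarrow> real \<Rightarrow> real \<Rightarrow> real \<Rightarrow> real \<Rightarrow> real \<Rightarrow> real \<Rightarrow> real
    \<Rightarrow> real \<Rightarrow> nat \<Rightarrow> real \<Rightarrow> ereal" where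
  "value_fn M B E U lam q \<theta> \<alpha> \<sigma> \<rho> \<nu> K \<rho>h \<mu>h x n \<mu> =
     (let Np = chain_n lam E n; Mp = chain_mu lam q E U n \<mu>; X = gbm \<theta> \<alpha> \<sigma> x B in
      SUP \<tau> \<in> {\<tau> :: 'a \<Rightarrow> ennreal. stopping_time (aug_filtration M B Np Mp) \<tau>}.
        ereal (\<integral>\<omega>.
           set_lebesgue_integral lborel {t. 0 \<le> t \<and> ennreal t < \<tau> \<omega>}
             (\<lambda>t. discount \<rho> Mp t \<omega> * (\<alpha> + \<nu> * Mp t \<omega>) * X t \<omega>)
         + (if \<tau> \<omega> = \<infinity> then 0 else
             (let T = enn2real (\<tau> \<omega>) in
              discount \<rho> Mp T \<omega> * fhat M lam q E U \<rho> \<rho>h \<mu>h (Np T \<omega>) (Mp T \<omega>) * (X T \<omega> - K)))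
         \<partial>completion M))"

end

theory Submission
  imports Defs
begin

lemma nn_integral_normal_density: "0 < s \<Longrightarrow> (\<integral>\<^sup>+x. ennreal (normal_density m s x) \<partial>lborel) = 1"
  by (subst nn_integral_eq_integral) (auto intro: integrable_normal_density simp: integral_normal_density)

lemma normal_mgf_nn:
  assumes D: "distributed M lborel Y (\<lambda>x. ennreal (normal_density 0 s x))" and s: "0 < s"
  shows "(\<integral>\<^sup>+\<omega>. ennreal (exp (a * Y \<omega>)) \<partial>M) = ennreal (exp (a\<^sup>2 * s\<^sup>2 / 2))"
proof -
  have "(\<integral>\<^sup>+\<omega>. ennreal (exp (a * Y \<omega>)) \<partial>M) =
      (\<integral>\<^sup>+x. ennreal (normal_density 0 s x) * ennreal (exp (a * x)) \<partial>lborel)"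
    by (rule distributed_nn_integral[OF D, symmetric]) simp
  also have "\<dots> = (\<integral>\<^sup>+x. ennreal (exp (a\<^sup>2 * s\<^sup>2 / 2)) * ennreal (normal_density (a * s\<^sup>2) s x) \<partial>lborel)"
  proof (intro nn_integral_cong)
    fix x :: real
    have "normal_density 0 s x * exp (a * x) = exp (a\<^sup>2 * s\<^sup>2 / 2) * normal_density (a * s\<^sup>2) s x"
    proof -
      have "exp (-(x - 0)\<^sup>2/ (2 * s\<^sup>2)) * exp (a * x) = exp (a\<^sup>2 * s\<^sup>2 / 2) * exp (-(x - a * s\<^sup>2)\<^sup>2/ (2 * s\<^sup>2))"
        unfolding exp_add[symmetric] using s by (simp add: field_simps power2_eq_square)
      then show ?thesis unfolding normal_density_def by (simp add: algebra_simps)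
    qed
    then show "ennreal (normal_density 0 s x) * ennreal (exp (a * x)) =
        ennreal (exp (a\<^sup>2 * s\<^sup>2 / 2)) * ennreal (normal_density (a * s\<^sup>2) s x)"
      by (simp add: ennreal_mult[symmetric])
  qed
  also have "\<dots> = ennreal (exp (a\<^sup>2 * s\<^sup>2 / 2))"
    by (subst nn_integral_cmult) (auto simp: nn_integral_normal_density s)
  finally show ?thesis .
qed

lemma normal_half:
  assumes M: "prob_space M" and D: "distributed M lborel Y (\<lambda>x. ennreal (normal_density 0 s x))" and s: "0 < s"
  shows "1/2 \<le> measure M {\<omega>\<in>space M. 0 \<le> Y \<omega>}"
proof -
  interpret prob_space M by fact
  have D2: "distributed M lborel (\<lambda>\<omega>. 0 + (-1) * Y \<omega>) (\<lambda>x. ennreal (normal_density (0 + (-1) * 0) (\<bar>-1\<bar> * s) x))"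
    by (rule normal_density_affine[OF D s]) simp
  have D2': "distributed M lborel (\<lambda>\<omega>. - Y \<omega>) (\<lambda>x. ennreal (normal_density 0 s x))"
    using D2 by simp
  have Ym[measurable]: "Y \<in> borel_measurable M"
    using D by (simp add: distributed_def)
  have e1: "emeasure M (Y -` {0..} \<inter> space M) = (\<integral>\<^sup>+x. ennreal (normal_density 0 s x) * indicator {0..} x \<partial>lborel)"
    by (rule distributed_emeasure[OF D]) simp
  have e2: "emeasure M ((\<lambda>\<omega>. - Y \<omega>) -` {0..} \<inter> space M) = (\<integral>\<^sup>+x. ennreal (normal_density 0 s x) * indicator {0..} x \<partial>lborel)"
    by (rule distributed_emeasure[OF D2']) simp
  have eq1: "Y -` {0..} \<inter> space M = {\<omega>\<in>space M. 0 \<le> Y \<omega>}" by auto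
  have eq2: "(\<lambda>\<omega>. - Y \<omega>) -` {0..} \<inter> space M = {\<omega>\<in>space M. Y \<omega> \<le> 0}" by auto
  have same: "measure M {\<omega>\<in>space M. 0 \<le> Y \<omega>} = measure M {\<omega>\<in>space M. Y \<omega> \<le> 0}"
    using e1 e2 unfolding eq1 eq2 by (simp add: measure_def)
  have "1 = measure M (space M)" by (simp add: prob_space)
  also have "space M = {\<omega>\<in>space M. 0 \<le> Y \<omega>} \<union> {\<omega>\<in>space M. Y \<omega> \<le> 0}" by auto
  also have "measure M \<dots> \<le> measure M {\<omega>\<in>space M. 0 \<le> Y \<omega>} + measure M {\<omega>\<in>space M. Y \<omega> \<le> 0}"
    by (rule measure_subadditive) auto
  finally show ?thesis using same by simp
qed

lemma bm_facts:
  assumes "std_brownian_motion M B"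
  shows bm_meas: "\<And>t. 0 \<le> t \<Longrightarrow> B t \<in> borel_measurable M"
    and bm_zero: "\<And>\<omega>. \<omega> \<in> space M \<Longrightarrow> B 0 \<omega> = 0"
    and bm_cont: "\<And>\<omega>. \<omega> \<in> space M \<Longrightarrow> continuous_on {0..} (\<lambda>t. B t \<omega>)"
    and bm_incr: "\<And>s t. 0 \<le> s \<Longrightarrow> s < t \<Longrightarrow>
        distributed M lborel (\<lambda>\<omega>. B t \<omega> - B s \<omega>) (\<lambda>x. ennreal (normal_density 0 (sqrt (t - s)) x))"
    and bm_indep: "\<And>ts. sorted_wrt (<) ts \<Longrightarrow> (\<forall>t\<in>set ts. 0 \<le> t) \<Longrightarrow>
        prob_space.indep_vars M (\<lambda>_. borel) (\<lambda>i \<omega>. B (ts ! Suc i) \<omega> - B (ts ! i) \<omega>) {..<length ts - 1}"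
  using assms unfolding std_brownian_motion_def by auto

lemma bm_split_indep:
  fixes B :: "real \<Rightarrow> 'a \<Rightarrow> real" and t :: "nat \<Rightarrow> real"
  assumes M: "prob_space M" and BM: "std_brownian_motion M B"
    and t0: "t 0 = 0" and tmono: "\<And>j k. j < k \<Longrightarrow> k \<le> m \<Longrightarrow> t j < t k"
    and im: "i < m"
    and Xa: "Xa \<in> sets (PiM {..<i} (\<lambda>_. borel))"
  shows "measure M ((\<lambda>\<omega>. restrict (\<lambda>l. B (t (Suc l)) \<omega> - B (t l) \<omega>) {..<i}) -` Xa \<inter> space M
           \<inter> {\<omega>\<in>space M. 0 \<le> B (t m) \<omega> - B (t i) \<omega>})
       = measure M ((\<lambda>\<omega>. restrict (\<lambda>l. B (t (Suc l)) \<omega> - B (t l) \<omega>) {..<i}) -` Xa \<inter> space M)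
         * measure M {\<omega>\<in>space M. 0 \<le> B (t m) \<omega> - B (t i) \<omega>}"
proof -
  interpret prob_space M by fact
  define s where "s l = (if l \<le> i then t l else t m)" for l
  define ts where "ts = map s [0..<i+2]"
  have tnn: "0 \<le> t j" if "j \<le> m" for j
    using tmono[of 0 j] that t0 by (cases "j = 0") auto
  have sorted: "sorted_wrt (<) ts"
    unfolding ts_def sorted_wrt_iff_nth_less
    using im by (auto simp: s_def simp del: upt_Suc intro!: tmono)
  have nn: "\<forall>u\<in>set ts. 0 \<le> u"
    using im by (auto simp: ts_def s_def simp del: upt_Suc intro!: tnn)
  have len: "length ts - 1 = Suc i" by (simp add: ts_def)
  define inc where "inc l \<omega> = B (ts ! Suc l) \<omega> - B (ts ! l) \<omega>" for l \<omega>
  have ind: "indep_vars (\<lambda>_. borel) inc {..<Suc i}"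
    using bm_indep[OF BM sorted nn] unfolding len inc_def .
  define K where "K b = (if b then {..<i} else {i})" for b
  have ind2: "indep_vars (\<lambda>b. PiM (K b) (\<lambda>_. borel)) (\<lambda>b \<omega>. restrict (\<lambda>l. inc l \<omega>) (K b)) UNIV"
    by (rule indep_vars_restrict[OF ind]) (auto simp: K_def disjoint_family_on_def)
  define Xb where "Xb = {v \<in> space (PiM {i} (\<lambda>_. borel::real measure)). 0 \<le> v i}"
  have Xb: "Xb \<in> sets (PiM {i} (\<lambda>_. borel::real measure))"
    unfolding Xb_def by measurable
  define A where "A b = (if b then Xa else Xb)" for b
  have P: "prob (\<Inter>b\<in>UNIV. (\<lambda>\<omega>. restrict (\<lambda>l. inc l \<omega>) (K b)) -` A b \<inter> space M)
     = (\<Prod>b\<in>UNIV. prob ((\<lambda>\<omega>. restrict (\<lambda>l. inc l \<omega>) (K b)) -` A b \<inter> space M))"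
    by (rule indep_varsD[OF ind2]) (auto simp: A_def K_def Xa Xb)
  have incl: "inc l \<omega> = B (t (Suc l)) \<omega> - B (t l) \<omega>" if "l < i" for l \<omega>
    using that by (simp add: inc_def ts_def s_def nth_append del: upt_Suc)
  have inci: "inc i \<omega> = B (t m) \<omega> - B (t i) \<omega>" for \<omega>
    using im by (simp add: inc_def ts_def s_def nth_append del: upt_Suc)
  have e1: "(\<lambda>\<omega>. restrict (\<lambda>l. inc l \<omega>) {..<i}) = (\<lambda>\<omega>. restrict (\<lambda>l. B (t (Suc l)) \<omega> - B (t l) \<omega>) {..<i})"
    by (auto simp: incl fun_eq_iff restrict_def)
  have e2: "(\<lambda>\<omega>. restrict (\<lambda>l. inc l \<omega>) {i}) -` Xb \<inter> space M = {\<omega>\<in>space M. 0 \<le> B (t m) \<omega> - B (t i) \<omega>}"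
    by (auto simp: Xb_def inci space_PiM)
  have "(\<Inter>b\<in>UNIV. (\<lambda>\<omega>. restrict (\<lambda>l. inc l \<omega>) (K b)) -` A b \<inter> space M) =
     (\<lambda>\<omega>. restrict (\<lambda>l. B (t (Suc l)) \<omega> - B (t l) \<omega>) {..<i}) -` Xa \<inter> space M
           \<inter> {\<omega>\<in>space M. 0 \<le> B (t m) \<omega> - B (t i) \<omega>}"
    using e1 e2 by (auto simp: UNIV_bool A_def K_def)
  moreover have "(\<Prod>b\<in>UNIV. prob ((\<lambda>\<omega>. restrict (\<lambda>l. inc l \<omega>) (K b)) -` A b \<inter> space M)) =
      measure M ((\<lambda>\<omega>. restrict (\<lambda>l. B (t (Suc l)) \<omega> - B (t l) \<omega>) {..<i}) -` Xa \<inter> space M)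
         * measure M {\<omega>\<in>space M. 0 \<le> B (t m) \<omega> - B (t i) \<omega>}"
    using e1 e2 by (simp add: UNIV_bool A_def K_def mult.commute)
  ultimately show ?thesis using P by simp
qed

lemma levy:
  fixes B :: "real \<Rightarrow> 'a \<Rightarrow> real" and t :: "nat \<Rightarrow> real"
  assumes M: "prob_space M" and BM: "std_brownian_motion M B"
    and t0: "t 0 = 0" and tmono: "\<And>j k. j < k \<Longrightarrow> k \<le> m \<Longrightarrow> t j < t k"
  shows "measure M {\<omega>\<in>space M. \<exists>j\<le>m. a < B (t j) \<omega>} \<le> 2 * measure M {\<omega>\<in>space M. a < B (t m) \<omega>}"
proof -
  interpret prob_space M by fact
  have tnn: "0 \<le> t j" if "j \<le> m" for j
    using tmono[of 0 j] that t0 by (cases "j = 0") auto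
  have Bm[measurable]: "B (t j) \<in> borel_measurable M" if "j \<le> m" for j
    using bm_meas[OF BM tnn[OF that]] .
  define A where "A i = {\<omega>\<in>space M. (\<forall>j<i. B (t j) \<omega> \<le> a) \<and> a < B (t i) \<omega>}" for i
  define C where "C = {\<omega>\<in>space M. a < B (t m) \<omega>}"
  have Asets: "A i \<in> sets M" if "i \<le> m" for i
  proof -
    have "A i = (\<Inter>j\<in>{..<i}. {\<omega>\<in>space M. B (t j) \<omega> \<le> a}) \<inter> {\<omega>\<in>space M. a < B (t i) \<omega>}"
      by (auto simp: A_def)
    also have "\<dots> \<in> sets M"
      using that by (cases "i = 0") (auto intro!: sets.Int sets.finite_INT)
    finally show ?thesis .
  qed
  have Csets: "C \<in> sets M" unfolding C_def by measurable
  have union: "{\<omega>\<in>space M. \<exists>j\<le>m. a < B (t j) \<omega>} = (\<Union>i\<in>{..m}. A i)"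
  proof (intro equalityI subsetI)
    fix \<omega> assume "\<omega> \<in> {\<omega>\<in>space M. \<exists>j\<le>m. a < B (t j) \<omega>}"
    then obtain j where j: "j \<le> m" "a < B (t j) \<omega>" "\<omega> \<in> space M" by auto
    define i where "i = (LEAST i. a < B (t i) \<omega>)"
    have i1: "a < B (t i) \<omega>" unfolding i_def by (rule LeastI[of _ j]) (use j in auto)
    have i2: "i \<le> j" unfolding i_def by (rule Least_le) (use j in auto)
    have i3: "B (t k) \<omega> \<le> a" if "k < i" for k
      using not_less_Least[of k "\<lambda>i. a < B (t i) \<omega>"] that unfolding i_def by auto
    show "\<omega> \<in> (\<Union>i\<in>{..m}. A i)"
      using i1 i2 i3 j by (auto simp: A_def intro!: bexI[of _ i])
  qed (auto simp: A_def)
  have disj: "disjoint_family_on A {..m}"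
    unfolding disjoint_family_on_def A_def
    by (auto simp: not_less_iff_gr_or_eq) (meson linorder_neqE_nat not_le)+
  have key: "measure M (A i) \<le> 2 * measure M (A i \<inter> C)" if im: "i \<le> m" for i
  proof (cases "i = m")
    case True
    then have "A i \<inter> C = A i" by (auto simp: A_def C_def)
    then show ?thesis by simp
  next
    case False
    then have im: "i < m" using im by simp
    define V where "V \<omega> = restrict (\<lambda>l. B (t (Suc l)) \<omega> - B (t l) \<omega>) {..<i}" for \<omega>
    define Xa where "Xa = {v \<in> space (PiM {..<i} (\<lambda>_. borel::real measure)).
        (\<forall>j<i. (\<Sum>l<j. v l) \<le> a) \<and> a < (\<Sum>l<i. v l)}"
    have summ: "(\<lambda>v. \<Sum>l<j. v l) \<in> borel_measurable (PiM {..<i} (\<lambda>_. borel::real measure))" if "j \<le> i" for j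
      using that by (intro borel_measurable_sum measurable_component_singleton) auto
    have s1: "{v \<in> space (PiM {..<i} (\<lambda>_. borel::real measure)). (\<Sum>l<j. v l) \<le> a} \<in> sets (PiM {..<i} (\<lambda>_. borel::real measure))"
      if "j \<le> i" for j
    proof -
      have "{v \<in> space (PiM {..<i} (\<lambda>_. borel::real measure)). (\<Sum>l<j. v l) \<le> a} = (\<lambda>v. \<Sum>l<j. v l) -` {..a} \<inter> space (PiM {..<i} (\<lambda>_. borel::real measure))"
        by auto
      then show ?thesis using measurable_sets[OF summ[OF that], of "{..a}"] by simp
    qed
    have s2: "{v \<in> space (PiM {..<i} (\<lambda>_. borel::real measure)). a < (\<Sum>l<i. v l)} \<in> sets (PiM {..<i} (\<lambda>_. borel::real measure))"
    proof -
      have "{v \<in> space (PiM {..<i} (\<lambda>_. borel::real measure)). a < (\<Sum>l<i. v l)} = (\<lambda>v. \<Sum>l<i. v l) -` {a<..} \<inter> space (PiM {..<i} (\<lambda>_. borel::real measure))"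
        by auto
      then show ?thesis using measurable_sets[OF summ[OF order.refl], of "{a<..}"] by simp
    qed
    have Xa: "Xa \<in> sets (PiM {..<i} (\<lambda>_. borel::real measure))"
    proof (cases "i = 0")
      case True
      then have "Xa = {v \<in> space (PiM {..<i} (\<lambda>_. borel::real measure)). a < (\<Sum>l<i. v l)}"
        by (auto simp: Xa_def)
      then show ?thesis using s2 by simp
    next
      case False
      have "Xa = (\<Inter>j\<in>{..<i}. {v \<in> space (PiM {..<i} (\<lambda>_. borel::real measure)). (\<Sum>l<j. v l) \<le> a})
         \<inter> {v \<in> space (PiM {..<i} (\<lambda>_. borel::real measure)). a < (\<Sum>l<i. v l)}"
        using False by (auto simp: Xa_def)
      also have "\<dots> \<in> sets (PiM {..<i} (\<lambda>_. borel::real measure))"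
        using False by (intro sets.Int sets.finite_INT s1 s2) auto
      finally show ?thesis .
    qed
    have tel: "(\<Sum>l<j. B (t (Suc l)) \<omega> - B (t l) \<omega>) = B (t j) \<omega>" if "\<omega> \<in> space M" for j \<omega>
      using that sum_lessThan_telescope[of "\<lambda>l. B (t l) \<omega>" j] by (simp add: t0 bm_zero[OF BM])
    have AV: "A i = V -` Xa \<inter> space M"
      by (auto simp: A_def V_def Xa_def space_PiM tel)
    define D where "D = {\<omega>\<in>space M. 0 \<le> B (t m) \<omega> - B (t i) \<omega>}"
    have indep: "measure M (A i \<inter> D) = measure M (A i) * measure M D"
      unfolding AV D_def V_def by (rule bm_split_indep[where t=t and B=B and M=M and m=m and i=i, OF M BM t0 tmono im Xa])
    have half: "1/2 \<le> measure M D"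
      unfolding D_def
      by (rule normal_half[OF M bm_incr[OF BM tnn[of i] tmono[OF im order.refl]]]) (use im tmono[OF im order.refl] in auto)
    have "A i \<inter> D \<subseteq> A i \<inter> C" by (auto simp: A_def D_def C_def)
    then have "measure M (A i \<inter> D) \<le> measure M (A i \<inter> C)"
      using Asets[of i] Csets im by (intro finite_measure_mono) auto
    moreover have "measure M (A i) \<le> 2 * measure M (A i \<inter> D)"
    proof -
      have "measure M (A i) * 1 \<le> measure M (A i) * (2 * measure M D)"
        using half measure_nonneg[of M "A i"] by (intro mult_left_mono) auto
      then show ?thesis using indep by (simp add: algebra_simps)
    qed
    ultimately show ?thesis by simp
  qed
  have "measure M {\<omega>\<in>space M. \<exists>j\<le>m. a < B (t j) \<omega>} = (\<Sum>i\<in>{..m}. measure M (A i))"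
    unfolding union by (rule measure_finite_Union) (auto intro: Asets disj)
  also have "\<dots> \<le> (\<Sum>i\<in>{..m}. 2 * measure M (A i \<inter> C))"
    by (intro sum_mono key) auto
  also have "\<dots> = 2 * measure M (\<Union>i\<in>{..m}. A i \<inter> C)"
  proof -
    have "disjoint_family_on (\<lambda>i. A i \<inter> C) {..m}"
      using disj unfolding disjoint_family_on_def by blast
    then show ?thesis
      by (subst measure_finite_Union) (auto intro!: Asets Csets simp: sum_distrib_left)
  qed
  also have "\<dots> \<le> 2 * measure M C"
    by (intro mult_left_mono finite_measure_mono) (auto intro!: Csets)
  finally show ?thesis unfolding C_def .
qed

lemma layer_cake_nn:
  assumes M: "sigma_finite_measure M" and h[measurable]: "h \<in> borel_measurable M"
    and hnn: "\<And>\<omega>. \<omega> \<in> space M \<Longrightarrow> 0 \<le> h \<omega>"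
  shows "(\<integral>\<^sup>+\<omega>. ennreal (h \<omega>) \<partial>M) =
    (\<integral>\<^sup>+y. indicator {0..} y * emeasure M {\<omega>\<in>space M. y < h \<omega>} \<partial>lborel)"
proof -
  interpret pair_sigma_finite M lborel
    by (intro pair_sigma_finite.intro M lborel.sigma_finite_measure_axioms)
  have "(\<integral>\<^sup>+\<omega>. ennreal (h \<omega>) \<partial>M) = (\<integral>\<^sup>+\<omega>. (\<integral>\<^sup>+y. indicator {0..} y * indicator {\<omega>\<in>space M. y < h \<omega>} \<omega> \<partial>lborel) \<partial>M)"
  proof (intro nn_integral_cong)
    fix \<omega> assume \<omega>: "\<omega> \<in> space M"
    have "(\<integral>\<^sup>+y. indicator {0..} y * indicator {\<omega>\<in>space M. y < h \<omega>} \<omega> \<partial>lborel) = (\<integral>\<^sup>+y. indicator {0..<h \<omega>} y \<partial>lborel)"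
      using \<omega> by (intro nn_integral_cong) (auto simp: indicator_def)
    also have "\<dots> = ennreal (h \<omega>)"
      using hnn[OF \<omega>] by simp
    finally show "ennreal (h \<omega>) = (\<integral>\<^sup>+y. indicator {0..} y * indicator {\<omega>\<in>space M. y < h \<omega>} \<omega> \<partial>lborel)" ..
  qed
  also have "\<dots> = (\<integral>\<^sup>+y. (\<integral>\<^sup>+\<omega>. indicator {0..} y * indicator {\<omega>\<in>space M. y < h \<omega>} \<omega> \<partial>M) \<partial>lborel)"
  proof (rule Fubini'[symmetric])
    have "(\<lambda>(\<omega>, y). indicator {0..} y * indicator {\<omega>\<in>space M. y < h \<omega>} \<omega> :: ennreal)
        = (\<lambda>p. indicator {0..} (snd p) * indicator {p\<in>space (M \<Otimes>\<^sub>M lborel). snd p < h (fst p)} p)"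
      by (auto simp: fun_eq_iff indicator_def space_pair_measure)
    also have "\<dots> \<in> borel_measurable (M \<Otimes>\<^sub>M lborel)"
      by measurable
    finally show "(\<lambda>(\<omega>, y). indicator {0..} y * indicator {\<omega>\<in>space M. y < h \<omega>} \<omega> :: ennreal) \<in> borel_measurable (M \<Otimes>\<^sub>M lborel)" .
  qed
  also have "\<dots> = (\<integral>\<^sup>+y. indicator {0..} y * emeasure M {\<omega>\<in>space M. y < h \<omega>} \<partial>lborel)"
    by (intro nn_integral_cong nn_integral_cmult_indicator) measurable
  finally show ?thesis .
qed

lemma layer_compare:
  assumes M: "sigma_finite_measure M" and [measurable]: "f \<in> borel_measurable M" "g \<in> borel_measurable M"
    and fnn: "\<And>\<omega>. \<omega> \<in> space M \<Longrightarrow> 0 \<le> f \<omega>" and gnn: "\<And>\<omega>. \<omega> \<in> space M \<Longrightarrow> 0 \<le> g \<omega>"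
    and cmp: "\<And>y. 0 \<le> y \<Longrightarrow> emeasure M {\<omega>\<in>space M. y < f \<omega>} \<le> c * emeasure M {\<omega>\<in>space M. y < g \<omega>}"
  shows "(\<integral>\<^sup>+\<omega>. ennreal (f \<omega>) \<partial>M) \<le> c * (\<integral>\<^sup>+\<omega>. ennreal (g \<omega>) \<partial>M)"
proof -
  have "(\<integral>\<^sup>+\<omega>. ennreal (f \<omega>) \<partial>M) = (\<integral>\<^sup>+y. indicator {0..} y * emeasure M {\<omega>\<in>space M. y < f \<omega>} \<partial>lborel)"
    by (rule layer_cake_nn[OF M]) (auto intro: fnn)
  also have "\<dots> \<le> (\<integral>\<^sup>+y. c * (indicator {0..} y * emeasure M {\<omega>\<in>space M. y < g \<omega>}) \<partial>lborel)"
    by (intro nn_integral_mono) (auto simp: indicator_def cmp)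
  also have "\<dots> = c * (\<integral>\<^sup>+y. indicator {0..} y * emeasure M {\<omega>\<in>space M. y < g \<omega>} \<partial>lborel)"
  proof (rule nn_integral_cmult)
    interpret sigma_finite_measure M by fact
    show "(\<lambda>y. indicator {0..} y * emeasure M {\<omega>\<in>space M. y < g \<omega>}) \<in> borel_measurable lborel"
    proof -
      interpret pair_sigma_finite lborel M
        by (intro pair_sigma_finite.intro M lborel.sigma_finite_measure_axioms)
      have "(\<lambda>y. emeasure M {\<omega>\<in>space M. y < g \<omega>}) = (\<lambda>y. \<integral>\<^sup>+\<omega>. indicator {p\<in>space (lborel \<Otimes>\<^sub>M M). fst p < g (snd p)} (y, \<omega>) \<partial>M)"
      proof
        fix y
        have "(\<integral>\<^sup>+\<omega>. indicator {p\<in>space (lborel \<Otimes>\<^sub>M M). fst p < g (snd p)} (y, \<omega>) \<partial>M)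
           = (\<integral>\<^sup>+\<omega>. indicator {\<omega>\<in>space M. y < g \<omega>} \<omega> \<partial>M)"
          by (intro nn_integral_cong) (auto simp: space_pair_measure indicator_def)
        also have "\<dots> = emeasure M {\<omega>\<in>space M. y < g \<omega>}"
          by (rule nn_integral_indicator) measurable
        finally show "emeasure M {\<omega>\<in>space M. y < g \<omega>} = (\<integral>\<^sup>+\<omega>. indicator {p\<in>space (lborel \<Otimes>\<^sub>M M). fst p < g (snd p)} (y, \<omega>) \<partial>M)" ..
      qed
      also have "\<dots> \<in> borel_measurable lborel"
      proof (rule sigma_finite_measure.borel_measurable_nn_integral[OF M])
        have "case_prod (\<lambda>y \<omega>. indicator {p\<in>space (lborel \<Otimes>\<^sub>M M). fst p < g (snd p)} (y, \<omega>) :: ennreal)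
          = indicator {p\<in>space (lborel \<Otimes>\<^sub>M M). fst p < g (snd p)}" by auto
        also have "\<dots> \<in> borel_measurable (lborel \<Otimes>\<^sub>M M)" by measurable
        finally show "case_prod (\<lambda>y \<omega>. indicator {p\<in>space (lborel \<Otimes>\<^sub>M M). fst p < g (snd p)} (y, \<omega>) :: ennreal) \<in> borel_measurable (lborel \<Otimes>\<^sub>M M)" .
      qed
      finally show ?thesis by measurable
    qed
  qed
  also have "\<dots> = c * (\<integral>\<^sup>+\<omega>. ennreal (g \<omega>) \<partial>M)"
    by (subst layer_cake_nn[OF M]) (auto intro: gnn)
  finally show ?thesis .
qed

lemma exp_max_grid:
  fixes B :: "real \<Rightarrow> 'a \<Rightarrow> real" and t :: "nat \<Rightarrow> real"
  assumes M: "prob_space M" and BM: "std_brownian_motion M B"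
    and t0: "t 0 = 0" and tmono: "\<And>j k. j < k \<Longrightarrow> k \<le> m \<Longrightarrow> t j < t k"
    and m: "0 < m" and \<sigma>: "0 < \<sigma>"
  shows "(\<integral>\<^sup>+\<omega>. ennreal (Max ((\<lambda>j. exp (\<sigma> * B (t j) \<omega>)) ` {..m})) \<partial>M) \<le> 2 * ennreal (exp (\<sigma>\<^sup>2 * t m / 2))"
proof -
  interpret prob_space M by fact
  have tnn: "0 \<le> t j" if "j \<le> m" for j
    using tmono[of 0 j] that t0 by (cases "j = 0") auto
  have tm: "0 < t m" using tmono[OF m order.refl] t0 by simp
  have Bm[measurable]: "B (t j) \<in> borel_measurable M" if "j \<le> m" for j
    using bm_meas[OF BM tnn[OF that]] .
  have fm: "(\<lambda>\<omega>. Max ((\<lambda>j. exp (\<sigma> * B (t j) \<omega>)) ` {..m})) \<in> borel_measurable M"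
    by (rule borel_measurable_Max) auto
  have Bmm[measurable]: "B (t m) \<in> borel_measurable M" by (rule Bm) simp
  have iff: "y < exp (\<sigma> * b) \<longleftrightarrow> (y \<le> 0 \<or> ln y / \<sigma> < b)" for y b
  proof (cases "y \<le> 0")
    case False
    then have "y < exp (\<sigma> * b) \<longleftrightarrow> ln y < \<sigma> * b"
      by (metis exp_less_cancel_iff exp_ln not_le)
    also have "\<dots> \<longleftrightarrow> ln y / \<sigma> < b" using \<sigma> by (simp add: pos_divide_less_eq mult.commute)
    finally show ?thesis using False by simp
  qed (use order.strict_trans1[OF _ exp_gt_zero] in auto)
  have "(\<integral>\<^sup>+\<omega>. ennreal (Max ((\<lambda>j. exp (\<sigma> * B (t j) \<omega>)) ` {..m})) \<partial>M) \<le> 2 * (\<integral>\<^sup>+\<omega>. ennreal (exp (\<sigma> * B (t m) \<omega>)) \<partial>M)"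
  proof (rule layer_compare)
    show "sigma_finite_measure M" by unfold_locales
    show "(\<lambda>\<omega>. Max ((\<lambda>j. exp (\<sigma> * B (t j) \<omega>)) ` {..m})) \<in> borel_measurable M" by (rule fm)
    show "(\<lambda>\<omega>. exp (\<sigma> * B (t m) \<omega>)) \<in> borel_measurable M" by measurable
    show "0 \<le> Max ((\<lambda>j. exp (\<sigma> * B (t j) \<omega>)) ` {..m})" for \<omega>
      by (rule order.trans[OF _ Max_ge[of _ "exp (\<sigma> * B (t 0) \<omega>)"]]) auto
    show "0 \<le> exp (\<sigma> * B (t m) \<omega>)" for \<omega> by simp
    fix y :: real assume "0 \<le> y"
    have e1: "{\<omega>\<in>space M. y < Max ((\<lambda>j. exp (\<sigma> * B (t j) \<omega>)) ` {..m})} =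
        (if y \<le> 0 then space M else {\<omega>\<in>space M. \<exists>j\<le>m. ln y / \<sigma> < B (t j) \<omega>})"
      by (auto simp: Max_gr_iff iff)
    have e2: "{\<omega>\<in>space M. y < exp (\<sigma> * B (t m) \<omega>)} =
        (if y \<le> 0 then space M else {\<omega>\<in>space M. ln y / \<sigma> < B (t m) \<omega>})"
      by (auto simp: iff)
    show "emeasure M {\<omega>\<in>space M. y < Max ((\<lambda>j. exp (\<sigma> * B (t j) \<omega>)) ` {..m})}
        \<le> 2 * emeasure M {\<omega>\<in>space M. y < exp (\<sigma> * B (t m) \<omega>)}"
    proof (cases "y \<le> 0")
      case True
      then show ?thesis unfolding e1 e2 by (simp add: emeasure_space_1)
    next
      case False
      have s1: "{\<omega>\<in>space M. \<exists>j\<le>m. ln y / \<sigma> < B (t j) \<omega>} \<in> sets M"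
      proof -
        have "{\<omega>\<in>space M. \<exists>j\<le>m. ln y / \<sigma> < B (t j) \<omega>} = (\<Union>j\<in>{..m}. {\<omega>\<in>space M. ln y / \<sigma> < B (t j) \<omega>})"
          by auto
        also have "\<dots> \<in> sets M" by (intro sets.finite_UN) auto
        finally show ?thesis .
      qed
      have "measure M {\<omega>\<in>space M. \<exists>j\<le>m. ln y / \<sigma> < B (t j) \<omega>} \<le> 2 * measure M {\<omega>\<in>space M. ln y / \<sigma> < B (t m) \<omega>}"
        by (rule levy[where M=M and B=B and t=t and m=m, OF M BM t0 tmono])
      then have "ennreal (measure M {\<omega>\<in>space M. \<exists>j\<le>m. ln y / \<sigma> < B (t j) \<omega>}) \<le> ennreal (2 * measure M {\<omega>\<in>space M. ln y / \<sigma> < B (t m) \<omega>})"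
        by (rule ennreal_leI)
      then show ?thesis unfolding e1 e2 using False s1
        by (simp add: emeasure_eq_measure ennreal_mult)
    qed
  qed
  also have "(\<integral>\<^sup>+\<omega>. ennreal (exp (\<sigma> * B (t m) \<omega>)) \<partial>M) = (\<integral>\<^sup>+\<omega>. ennreal (exp (\<sigma> * (B (t m) \<omega> - B 0 \<omega>))) \<partial>M)"
    by (intro nn_integral_cong) (simp add: bm_zero[OF BM])
  also have "\<dots> = ennreal (exp (\<sigma>\<^sup>2 * (sqrt (t m - 0))\<^sup>2 / 2))"
    by (rule normal_mgf_nn[OF bm_incr[OF BM order.refl tm]]) (use tm in simp)
  also have "\<dots> = ennreal (exp (\<sigma>\<^sup>2 * t m / 2))" using tm by simp
  finally show ?thesis .
qed

lemma dyadic_approx: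
  fixes s T :: real
  assumes T: "0 < T" and s: "0 \<le> s" "s \<le> T"
  defines "j \<equiv> \<lambda>n::nat. nat \<lfloor>s * 2^n / T\<rfloor>"
  shows "\<And>n. j n \<le> 2^n" and "(\<lambda>n. real (j n) * T / 2^n) \<longlonglongrightarrow> s"
proof -
  fix n :: nat
  have "s * 2^n / T \<le> 2^n" using s T by (simp add: divide_le_eq mult.commute mult_left_mono)
  moreover have "real (j n) = of_int \<lfloor>s * 2^n / T\<rfloor>"
    unfolding j_def using s T by simp
  moreover have "real_of_int \<lfloor>s * 2^n / T\<rfloor> \<le> s * 2^n / T" by (rule of_int_floor_le)
  ultimately have "real (j n) \<le> 2^n" by linarith
  then show "j n \<le> 2^n" by (metis of_nat_le_iff of_nat_numeral of_nat_power)
next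
  have fl: "real (j n) = of_int \<lfloor>s * 2^n / T\<rfloor>" for n
    unfolding j_def using s T by simp
  have up: "real (j n) * T / 2^n \<le> s" for n
  proof -
    have "real (j n) \<le> s * 2^n / T" unfolding fl by simp
    then show ?thesis using T by (simp add: field_simps)
  qed
  have lo: "s - T / 2^n \<le> real (j n) * T / 2^n" for n
  proof -
    have "s * 2^n / T - 1 \<le> real (j n)" unfolding fl by linarith
    then have "(s * 2^n / T - 1) * T / 2^n \<le> real (j n) * T / 2^n"
      using T by (intro divide_right_mono mult_right_mono) auto
    also have "(s * 2^n / T - 1) * T / 2^n = s - T / 2^n" using T by (simp add: field_simps)
    finally show ?thesis .
  qed
  have "(\<lambda>n. s - T / 2^n) \<longlonglongrightarrow> s - 0"
    by (intro tendsto_diff tendsto_const LIMSEQ_divide_realpow_zero) simp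
  then have L: "(\<lambda>n. s - T / 2^n) \<longlonglongrightarrow> s" by simp
  show "(\<lambda>n. real (j n) * T / 2^n) \<longlonglongrightarrow> s"
    by (rule tendsto_sandwich[OF always_eventually always_eventually L tendsto_const]) (use up lo in blast)+
qed

definition supH :: "real \<Rightarrow> (real \<Rightarrow> 'a \<Rightarrow> real) \<Rightarrow> real \<Rightarrow> 'a \<Rightarrow> ennreal" where
  "supH \<sigma> B T \<omega> = (SUP s\<in>{0..T}. ennreal (exp (\<sigma> * B s \<omega>)))"

lemma sup_interval:
  fixes B :: "real \<Rightarrow> 'a \<Rightarrow> real"
  assumes M: "prob_space M" and BM: "std_brownian_motion M B" and T: "0 < T" and \<sigma>: "0 < \<sigma>"
  shows "supH \<sigma> B T \<in> borel_measurable M"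
    and "(\<integral>\<^sup>+\<omega>. supH \<sigma> B T \<omega> \<partial>M) \<le> 2 * ennreal (exp (\<sigma>\<^sup>2 * T / 2))"
proof -
  interpret prob_space M by fact
  define t where "t n j = real j * T / 2^n" for n :: nat and j :: nat
  define G where "G n \<omega> = ennreal (Max ((\<lambda>j. exp (\<sigma> * B (t n j) \<omega>)) ` {..2^n}))" for n \<omega>
  have tin: "t n j \<in> {0..T}" if "j \<le> 2^n" for n j
    using that T by (auto simp: t_def field_simps)
  have Gm: "G n \<in> borel_measurable M" for n
  proof -
    have [measurable]: "B (t n j) \<in> borel_measurable M" for j
      by (rule bm_meas[OF BM]) (use T in \<open>simp add: t_def\<close>)
    show ?thesis unfolding G_def by measurable
  qed
  have inc: "incseq G"
  proof (intro incseq_SucI le_funI)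
    fix n \<omega>
    have "Max ((\<lambda>j. exp (\<sigma> * B (t n j) \<omega>)) ` {..2^n}) \<le> Max ((\<lambda>j. exp (\<sigma> * B (t (Suc n) j) \<omega>)) ` {..2^Suc n})"
    proof (subst Max_le_iff, simp, simp, safe)
      fix j :: nat assume "j \<le> 2^n"
      then have "t n j = t (Suc n) (2*j)" "2*j \<le> 2^Suc n" by (auto simp: t_def)
      then show "exp (\<sigma> * B (t n j) \<omega>) \<le> Max ((\<lambda>j. exp (\<sigma> * B (t (Suc n) j) \<omega>)) ` {..2^Suc n})"
        by (intro Max_ge) auto
    qed
    then show "G n \<omega> \<le> G (Suc n) \<omega>" unfolding G_def by (rule ennreal_leI)
  qed
  have eq: "supH \<sigma> B T \<omega> = (SUP n. G n \<omega>)" if \<omega>: "\<omega> \<in> space M" for \<omega>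
  proof (rule antisym)
    show "supH \<sigma> B T \<omega> \<le> (SUP n. G n \<omega>)"
      unfolding supH_def
    proof (rule SUP_least)
      fix s assume s: "s \<in> {0..T}"
      define j where "j n = nat \<lfloor>s * 2^n / T\<rfloor>" for n :: nat
      have jle: "j n \<le> 2^n" for n using dyadic_approx(1)[OF T, of s] s unfolding j_def by auto
      have lim: "(\<lambda>n. t n (j n)) \<longlonglongrightarrow> s" using dyadic_approx(2)[OF T, of s] s unfolding j_def t_def by auto
      have "(\<lambda>n. B (t n (j n)) \<omega>) \<longlonglongrightarrow> B s \<omega>"
        by (rule continuous_on_tendsto_compose[OF bm_cont[OF BM \<omega>] lim]) (use s tin jle in auto)
      then have L: "(\<lambda>n. ennreal (exp (\<sigma> * B (t n (j n)) \<omega>))) \<longlonglongrightarrow> ennreal (exp (\<sigma> * B s \<omega>))"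
        by (intro tendsto_ennrealI tendsto_exp tendsto_mult tendsto_const)
      have U: "ennreal (exp (\<sigma> * B (t n (j n)) \<omega>)) \<le> (SUP n. G n \<omega>)" for n
      proof -
        have "ennreal (exp (\<sigma> * B (t n (j n)) \<omega>)) \<le> G n \<omega>"
          unfolding G_def using jle by (intro ennreal_leI Max_ge) auto
        also have "\<dots> \<le> (SUP n. G n \<omega>)" by (rule SUP_upper) simp
        finally show ?thesis .
      qed
      show "ennreal (exp (\<sigma> * B s \<omega>)) \<le> (SUP n. G n \<omega>)"
        by (rule LIMSEQ_le_const2[OF L]) (use U in blast)
    qed
    show "(SUP n. G n \<omega>) \<le> supH \<sigma> B T \<omega>"
    proof (rule SUP_least)
      fix n
      obtain j where j: "j \<le> 2^n" "Max ((\<lambda>j. exp (\<sigma> * B (t n j) \<omega>)) ` {..2^n}) = exp (\<sigma> * B (t n j) \<omega>)"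
      proof -
        have "Max ((\<lambda>j. exp (\<sigma> * B (t n j) \<omega>)) ` {..2^n}) \<in> (\<lambda>j. exp (\<sigma> * B (t n j) \<omega>)) ` {..2^n}"
          by (rule Max_in) auto
        then obtain j where "j \<in> {..2^n}" "Max ((\<lambda>j. exp (\<sigma> * B (t n j) \<omega>)) ` {..2^n}) = exp (\<sigma> * B (t n j) \<omega>)"
          by (rule imageE) 
        then show ?thesis using that by blast
      qed
      show "G n \<omega> \<le> supH \<sigma> B T \<omega>"
        unfolding G_def j(2) supH_def by (rule SUP_upper) (use tin j in auto)
    qed
  qed
  show "supH \<sigma> B T \<in> borel_measurable M"
    using measurable_cong[of M "supH \<sigma> B T" "\<lambda>\<omega>. SUP n. G n \<omega>"] eq Gm by auto
  have "(\<integral>\<^sup>+\<omega>. supH \<sigma> B T \<omega> \<partial>M) = (\<integral>\<^sup>+\<omega>. (SUP n. G n \<omega>) \<partial>M)"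
    by (intro nn_integral_cong eq)
  also have "\<dots> = (SUP n. integral\<^sup>N M (G n))"
    by (rule nn_integral_monotone_convergence_SUP[OF inc Gm])
  also have "\<dots> \<le> 2 * ennreal (exp (\<sigma>\<^sup>2 * T / 2))"
  proof (rule SUP_least)
    fix n
    have "integral\<^sup>N M (G n) \<le> 2 * ennreal (exp (\<sigma>\<^sup>2 * t n (2^n) / 2))"
      unfolding G_def
      by (rule exp_max_grid[OF M BM _ _ _ \<sigma>]) (use T in \<open>auto simp: t_def field_simps\<close>)
    then show "integral\<^sup>N M (G n) \<le> 2 * ennreal (exp (\<sigma>\<^sup>2 * T / 2))" by (simp add: t_def)
  qed
  finally show "(\<integral>\<^sup>+\<omega>. supH \<sigma> B T \<omega> \<partial>M) \<le> 2 * ennreal (exp (\<sigma>\<^sup>2 * T / 2))" .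
qed

definition Wsum :: "real \<Rightarrow> real \<Rightarrow> (real \<Rightarrow> 'a \<Rightarrow> real) \<Rightarrow> 'a \<Rightarrow> ennreal" where
  "Wsum c \<sigma> B \<omega> = (\<Sum>k. ennreal (exp (c * real k)) * supH \<sigma> B (real k + 1) \<omega>)"

lemma Wsum_bound:
  fixes B :: "real \<Rightarrow> 'a \<Rightarrow> real"
  assumes M: "prob_space M" and BM: "std_brownian_motion M B" and \<sigma>: "0 < \<sigma>"
    and c: "c + \<sigma>\<^sup>2 / 2 < 0"
  shows "Wsum c \<sigma> B \<in> borel_measurable M"
    and "(\<integral>\<^sup>+\<omega>. Wsum c \<sigma> B \<omega> \<partial>M) \<le> ennreal (2 * exp (\<sigma>\<^sup>2 / 2) / (1 - exp (c + \<sigma>\<^sup>2 / 2)))"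
proof -
  have Hm[measurable]: "supH \<sigma> B (real k + 1) \<in> borel_measurable M" for k
    by (rule sup_interval(1)[OF M BM _ \<sigma>]) simp
  show "Wsum c \<sigma> B \<in> borel_measurable M"
    unfolding Wsum_def by measurable
  define r where "r = exp (c + \<sigma>\<^sup>2 / 2)"
  have r: "0 < r" "r < 1" using c by (auto simp: r_def)
  have "(\<integral>\<^sup>+\<omega>. Wsum c \<sigma> B \<omega> \<partial>M) = (\<Sum>k. \<integral>\<^sup>+\<omega>. ennreal (exp (c * real k)) * supH \<sigma> B (real k + 1) \<omega> \<partial>M)"
    unfolding Wsum_def by (rule nn_integral_suminf) measurable
  also have "\<dots> = (\<Sum>k. ennreal (exp (c * real k)) * \<integral>\<^sup>+\<omega>. supH \<sigma> B (real k + 1) \<omega> \<partial>M)"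
    by (intro suminf_cong nn_integral_cmult) measurable
  also have "\<dots> \<le> (\<Sum>k. ennreal (2 * exp (\<sigma>\<^sup>2 / 2) * r ^ k))"
  proof (intro suminf_le summableI)
    fix k :: nat
    have "ennreal (exp (c * real k)) * (\<integral>\<^sup>+\<omega>. supH \<sigma> B (real k + 1) \<omega> \<partial>M)
        \<le> ennreal (exp (c * real k)) * (2 * ennreal (exp (\<sigma>\<^sup>2 * (real k + 1) / 2)))"
      by (intro mult_left_mono sup_interval(2)[OF M BM _ \<sigma>]) auto
    also have "\<dots> = ennreal (2 * exp (\<sigma>\<^sup>2 / 2) * r ^ k)"
    proof -
      have F: "exp (c * real k) * (2 * exp (\<sigma>\<^sup>2 * (real k + 1) / 2)) = 2 * exp (\<sigma>\<^sup>2 / 2) * r ^ k"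
      proof -
        have "r ^ k = exp (real k * (c + \<sigma>\<^sup>2 / 2))" unfolding r_def by (simp add: exp_of_nat_mult)
        moreover have "c * real k + \<sigma>\<^sup>2 * (real k + 1) / 2 = \<sigma>\<^sup>2 / 2 + real k * (c + \<sigma>\<^sup>2 / 2)"
          by (simp add: algebra_simps add_divide_distrib)
        ultimately show ?thesis by (simp add: exp_add[symmetric])
      qed
      have G: "ennreal (exp (c * real k)) * (2 * ennreal (exp (\<sigma>\<^sup>2 * (real k + 1) / 2)))
          = ennreal (exp (c * real k) * (2 * exp (\<sigma>\<^sup>2 * (real k + 1) / 2)))"
        by (simp add: ennreal_mult)
      show ?thesis by (simp only: F G)
    qed
    finally show "ennreal (exp (c * real k)) * (\<integral>\<^sup>+\<omega>. supH \<sigma> B (real k + 1) \<omega> \<partial>M) \<le> ennreal (2 * exp (\<sigma>\<^sup>2 / 2) * r ^ k)" .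
  qed
  also have "\<dots> = ennreal (\<Sum>k. 2 * exp (\<sigma>\<^sup>2 / 2) * r ^ k)"
    using r by (intro suminf_ennreal2) (auto intro!: summable_mult)
  also have "(\<Sum>k. 2 * exp (\<sigma>\<^sup>2 / 2) * r ^ k) = 2 * exp (\<sigma>\<^sup>2 / 2) / (1 - r)"
    using r by (subst suminf_mult) (auto simp: suminf_geometric)
  finally show "(\<integral>\<^sup>+\<omega>. Wsum c \<sigma> B \<omega> \<partial>M) \<le> ennreal (2 * exp (\<sigma>\<^sup>2 / 2) / (1 - exp (c + \<sigma>\<^sup>2 / 2)))"
    unfolding r_def .
qed

lemma supZ_le_Wsum:
  fixes B :: "real \<Rightarrow> 'a \<Rightarrow> real"
  assumes c: "c \<le> 0" and t: "0 \<le> t"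
  shows "ennreal (exp (c * t + \<sigma> * B t \<omega>)) \<le> Wsum c \<sigma> B \<omega>"
proof -
  define k where "k = nat \<lfloor>t\<rfloor>"
  have k1: "real k \<le> t" "t \<le> real k + 1" using t unfolding k_def by linarith+
  have "exp (c * t + \<sigma> * B t \<omega>) = exp (c * t) * exp (\<sigma> * B t \<omega>)" by (simp add: exp_add)
  also have "\<dots> \<le> exp (c * real k) * exp (\<sigma> * B t \<omega>)"
    using k1 c by (intro mult_right_mono) (auto intro: mult_left_mono_neg)
  finally have "ennreal (exp (c * t + \<sigma> * B t \<omega>)) \<le> ennreal (exp (c * real k)) * ennreal (exp (\<sigma> * B t \<omega>))"
    by (simp add: ennreal_mult[symmetric] ennreal_leI)
  also have "\<dots> \<le> ennreal (exp (c * real k)) * supH \<sigma> B (real k + 1) \<omega>"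
    unfolding supH_def using k1 t by (intro mult_left_mono SUP_upper) auto
  also have "\<dots> \<le> Wsum c \<sigma> B \<omega>"
    unfolding Wsum_def
    using sum_le_suminf[of "\<lambda>k. ennreal (exp (c * real k)) * supH \<sigma> B (real k + 1) \<omega>" "{k}"]
    by (simp add: summableI)
  finally show ?thesis .
qed

lemma jump_time_top:
  assumes lz: "\<forall>i. N + 1 \<le> i \<longrightarrow> lam i = 0" and n: "n \<le> N" and k: "N - n \<le> k"
  shows "jump_time lam E n (Suc k) \<omega> = \<infinity>"
proof -
  have "hold_time lam E n (N - n) \<omega> = \<infinity>"
    using n lz by (simp add: hold_time_def)
  moreover have "hold_time lam E n (N - n) \<omega> \<le> jump_time lam E n (Suc k) \<omega>"
    unfolding jump_time_def using k by (intro member_le_sum) auto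
  ultimately show ?thesis by (simp add: top_unique)
qed

lemma jump_set_sub:
  assumes lz: "\<forall>i. N + 1 \<le> i \<longrightarrow> lam i = 0" and n: "n \<le> N"
  shows "{k. jump_time lam E n (Suc k) \<omega> \<le> ennreal t} \<subseteq> {..<N - n}"
proof
  fix k assume "k \<in> {k. jump_time lam E n (Suc k) \<omega> \<le> ennreal t}"
  then have "jump_time lam E n (Suc k) \<omega> \<noteq> \<infinity>" by (auto simp: top_unique)
  then show "k \<in> {..<N - n}" using jump_time_top[of N lam n k E \<omega>, OF lz n] by (cases "N - n \<le> k") auto
qed

lemma jump_count_le:
  assumes lz: "\<forall>i. N + 1 \<le> i \<longrightarrow> lam i = 0" and n: "n \<le> N"
  shows "jump_count lam E n t \<omega> \<le> N - n"
proof -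
  have "card {k. jump_time lam E n (Suc k) \<omega> \<le> ennreal t} \<le> card {..<N - n}"
    by (rule card_mono[OF _ jump_set_sub[of N lam n E \<omega> t, OF lz n]]) simp
  then show ?thesis unfolding jump_count_def by simp
qed

lemma jump_count_mono:
  assumes lz: "\<forall>i. N + 1 \<le> i \<longrightarrow> lam i = 0" and n: "n \<le> N" and st: "s \<le> t"
  shows "jump_count lam E n s \<omega> \<le> jump_count lam E n t \<omega>"
  unfolding jump_count_def
proof (rule card_mono)
  show "finite {k. jump_time lam E n (Suc k) \<omega> \<le> ennreal t}"
    by (rule finite_subset[OF jump_set_sub[of N lam n E \<omega> t, OF lz n]]) (rule finite_lessThan)
  show "{k. jump_time lam E n (Suc k) \<omega> \<le> ennreal s} \<subseteq> {k. jump_time lam E n (Suc k) \<omega> \<le> ennreal t}"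
  proof
    fix k assume "k \<in> {k. jump_time lam E n (Suc k) \<omega> \<le> ennreal s}"
    then have "jump_time lam E n (Suc k) \<omega> \<le> ennreal s" by simp
    also have "ennreal s \<le> ennreal t" using st by (rule ennreal_leI)
    finally show "k \<in> {k. jump_time lam E n (Suc k) \<omega> \<le> ennreal t}" by simp
  qed
qed

lemma quantile_in:
  assumes Q: "prob_space Q" "sets Q = sets borel" "emeasure Q {a..b} = 1" and ab: "a \<le> b"
    and u: "0 < u" "u < 1"
  shows "quantile Q u \<in> {a..b}"
proof -
  interpret Q: prob_space Q by fact
  define S where "S = {z. u \<le> measure Q {..z}}"
  have ab1: "measure Q {a..b} = 1" using Q(3) by (simp add: Q.emeasure_eq_measure)
  have bS: "b \<in> S"
  proof -
    have "measure Q {a..b} \<le> measure Q {..b}"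
      by (rule Q.finite_measure_mono) (auto simp: Q(2))
    then show ?thesis using ab1 u unfolding S_def by simp
  qed
  have lb: "a \<le> z" if "z \<in> S" for z
  proof (rule ccontr)
    assume "\<not> a \<le> z"
    then have disj: "{..z} \<inter> {a..b} = {}" by auto
    have "measure Q ({..z} \<union> {a..b}) = measure Q {..z} + measure Q {a..b}"
      by (rule Q.finite_measure_Union) (use disj in \<open>auto simp: Q(2)\<close>)
    moreover have "measure Q ({..z} \<union> {a..b}) \<le> 1" by (rule Q.prob_le_1)
    ultimately have "measure Q {..z} \<le> 0" using ab1 by simp
    then show False using that u unfolding S_def by simp
  qed
  have "a \<le> Inf S" by (rule cInf_greatest) (use bS lb in auto)
  moreover have "Inf S \<le> b" by (rule cInf_lower[OF bS]) (use lb in \<open>auto simp: bdd_below_def\<close>)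
  ultimately show ?thesis unfolding quantile_def S_def by simp
qed

lemma chain_mark_in:
  assumes qp: "\<forall>n \<mu>. n + 1 \<le> N \<longrightarrow> \<mu> \<in> {\<mu>m..\<mu>M} \<longrightarrow>
        prob_space (q n \<mu>) \<and> sets (q n \<mu>) = sets borel \<and> emeasure (q n \<mu>) {\<mu>m..\<mu>M} = 1"
    and mM: "\<mu>m \<le> \<mu>M" and \<mu>: "\<mu> \<in> {\<mu>m..\<mu>M}" and n: "n \<le> N"
    and U: "\<forall>k. U k \<omega> \<in> {0<..<1}"
  shows "k \<le> N - n \<Longrightarrow> chain_mark q U n \<mu> k \<omega> \<in> {\<mu>m..\<mu>M}"
proof (induction k)
  case 0
  then show ?case using \<mu> by simp
next
  case (Suc k)
  then have IH: "chain_mark q U n \<mu> k \<omega> \<in> {\<mu>m..\<mu>M}" by simp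
  have "n + k + 1 \<le> N" using Suc.prems n by simp
  from qp this IH have P: "prob_space (q (n + k) (chain_mark q U n \<mu> k \<omega>))"
      "sets (q (n + k) (chain_mark q U n \<mu> k \<omega>)) = sets borel"
      "emeasure (q (n + k) (chain_mark q U n \<mu> k \<omega>)) {\<mu>m..\<mu>M} = 1" by blast+
  have "quantile (q (n + k) (chain_mark q U n \<mu> k \<omega>)) (U k \<omega>) \<in> {\<mu>m..\<mu>M}"
    by (rule quantile_in[OF P mM]) (use U in auto)
  then show ?case by simp
qed

lemma chain_mu_in:
  assumes qp: "\<forall>n \<mu>. n + 1 \<le> N \<longrightarrow> \<mu> \<in> {\<mu>m..\<mu>M} \<longrightarrow>
        prob_space (q n \<mu>) \<and> sets (q n \<mu>) = sets borel \<and> emeasure (q n \<mu>) {\<mu>m..\<mu>M} = 1"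
    and lz: "\<forall>i. N + 1 \<le> i \<longrightarrow> lam i = 0"
    and mM: "\<mu>m \<le> \<mu>M" and \<mu>: "\<mu> \<in> {\<mu>m..\<mu>M}" and n: "n \<le> N"
    and U: "\<forall>k. U k \<omega> \<in> {0<..<1}"
  shows "chain_mu lam q E U n \<mu> t \<omega> \<in> {\<mu>m..\<mu>M}"
  unfolding chain_mu_def by (rule chain_mark_in[where U=U and \<omega>=\<omega> and q=q, OF qp mM \<mu> n U jump_count_le[of N lam n E t \<omega>, OF lz n]])

lemma chain_n_le:
  assumes lz: "\<forall>i. N + 1 \<le> i \<longrightarrow> lam i = 0" and n: "n \<le> N"
  shows "chain_n lam E n t \<omega> \<le> N"
  unfolding chain_n_def using jump_count_le[of N lam n E t \<omega>, OF lz n] n by simp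

lemma chain_mu_measurable:
  assumes lz: "\<forall>i. N + 1 \<le> i \<longrightarrow> lam i = 0" and n: "n \<le> N"
  shows "(\<lambda>s. chain_mu lam q E U n \<mu> s \<omega>) \<in> borel_measurable borel"
proof -
  define J where "J s = jump_count lam E n s \<omega>" for s
  have mono: "mono (\<lambda>s. real (J s))"
    unfolding J_def by (intro monoI) (simp add: jump_count_mono[of N lam n, OF lz n])
  have Jr[measurable]: "(\<lambda>s. real (J s)) \<in> borel_measurable borel"
    by (rule borel_measurable_mono[OF mono])
  have "J \<in> measurable borel (count_space UNIV)"
  proof (subst measurable_count_space_eq2_countable, safe)
    fix a :: nat
    have "J -` {a} \<inter> space borel = (\<lambda>s. real (J s)) -` {real a} \<inter> space borel" by auto
    also have "\<dots> \<in> sets borel" by (rule measurable_sets[OF Jr]) simp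
    finally show "J -` {a} \<inter> space borel \<in> sets borel" .
  qed auto
  then have "(\<lambda>s. chain_mark q U n \<mu> (J s) \<omega>) \<in> borel_measurable borel"
    by (rule measurable_compose[OF _ measurable_count_space_eq1[THEN iffD2]]) auto
  then show ?thesis unfolding chain_mu_def J_def .
qed

lemma ennreal_integral_le_nn:
  fixes f :: "'a \<Rightarrow> real"
  shows "ennreal (integral\<^sup>L M f) \<le> (\<integral>\<^sup>+x. ennreal (f x) \<partial>M)"
proof (cases "(\<integral>\<^sup>+x. ennreal (f x) \<partial>M) = \<infinity>")
  case True then show ?thesis by simp
next
  case False
  define r where "r = enn2real (\<integral>\<^sup>+x. ennreal (f x) \<partial>M)"
  have r: "(\<integral>\<^sup>+x. ennreal (f x) \<partial>M) = ennreal r" "0 \<le> r"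
    using False by (auto simp: r_def less_top)
  have "integral\<^sup>L M f \<le> r" by (rule integral_real_bounded) (use r in auto)
  then show ?thesis unfolding r by (rule ennreal_leI)
qed

lemma nn_integral_exp_neg:
  assumes a: "0 < a"
  shows "(\<integral>\<^sup>+t. indicator {0..} t * ennreal (exp (- a * t)) \<partial>lborel) = ennreal (1 / a)"
proof -
  have "(\<integral>\<^sup>+t. indicator {0..} t * ennreal (exp (- a * t)) \<partial>lborel)
      = (\<integral>\<^sup>+t. ennreal (1 / a) * ennreal (exponential_density a t) \<partial>lborel)"
    using a by (intro nn_integral_cong) (auto simp: exponential_density_def ennreal_mult[symmetric] mult.commute indicator_def)
  also have "\<dots> = ennreal (1 / a) * (\<integral>\<^sup>+t. ennreal (exponential_density a t) \<partial>lborel)"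
    by (rule nn_integral_cmult) measurable
  also have "(\<integral>\<^sup>+t. ennreal (exponential_density a t) \<partial>lborel) = 1"
  proof -
    interpret prob_space "density lborel (exponential_density a)"
      by (rule prob_space_exponential_density[OF a])
    have "emeasure (density lborel (exponential_density a)) UNIV = 1"
      using emeasure_space_1 by simp
    then show ?thesis by (simp add: emeasure_density)
  qed
  finally show ?thesis by simp
qed

lemma AE_U_good:
  fixes U :: "nat \<Rightarrow> 'a \<Rightarrow> real"
  assumes M: "prob_space M" and U: "\<And>k. distributed M lborel (U k) (indicator {0<..<1})"
  shows "AE \<omega> in M. \<forall>k. U k \<omega> \<in> {0<..<1::real}"
proof -
  have "AE \<omega> in M. U k \<omega> \<in> {0<..<1::real}" for k
  proof -
  have Um: "U k \<in> borel_measurable M" using U[of k] by (simp add: distributed_def)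
  have "emeasure M (U k -` (- {0<..<1}) \<inter> space M) = (\<integral>\<^sup>+x. indicator {0<..<1} x * indicator (- {0<..<1::real}) x \<partial>lborel)"
    by (rule distributed_emeasure[OF U[of k]]) simp
  also have "\<dots> = (\<integral>\<^sup>+x. 0 \<partial>(lborel::real measure))" by (intro nn_integral_cong) (simp add: indicator_def)
  also have "\<dots> = 0" by simp
  finally have N: "U k -` (- {0<..<1}) \<inter> space M \<in> null_sets M"
    using measurable_sets[OF Um, of "- {0<..<1}"] by (auto simp: null_sets_def)
  show "AE \<omega> in M. U k \<omega> \<in> {0<..<1::real}"
    by (rule AE_I'[OF N]) auto
  qed
  then show ?thesis by (simp add: AE_all_countable)
qed

lemma discount_bound:
  assumes Mp_in: "\<And>s. Mp s \<omega> \<in> {\<mu>m..\<mu>M}" and Mp_m: "(\<lambda>s. Mp s \<omega>) \<in> borel_measurable borel"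
    and t: "0 \<le> t"
  shows "discount \<rho> Mp t \<omega> \<le> exp (- (\<rho> + \<mu>m) * t)"
proof -
  have int: "set_integrable lborel {0..t} (\<lambda>s. Mp s \<omega>)"
    unfolding set_integrable_def
  proof (rule integrableI_bounded_set_indicator[where B="\<bar>\<mu>m\<bar> + \<bar>\<mu>M\<bar>"])
    show "emeasure lborel {0..t} < \<infinity>" using t by simp
    show "AE x in lborel. x \<in> {0..t} \<longrightarrow> norm (Mp x \<omega>) \<le> \<bar>\<mu>m\<bar> + \<bar>\<mu>M\<bar>"
    proof (rule AE_I2, rule impI)
      fix x
      from Mp_in[of x] show "norm (Mp x \<omega>) \<le> \<bar>\<mu>m\<bar> + \<bar>\<mu>M\<bar>" by auto
    qed
  qed (use Mp_m in auto)
  have intc: "set_integrable lborel {0..t} (\<lambda>s. \<mu>m)"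
    unfolding set_integrable_def
    by (rule integrableI_bounded_set_indicator[where B="\<bar>\<mu>m\<bar>"]) (use t in auto)
  have "set_lebesgue_integral lborel {0..t} (\<lambda>s. \<mu>m) \<le> set_lebesgue_integral lborel {0..t} (\<lambda>s. Mp s \<omega>)"
    by (rule set_integral_mono[OF intc int]) (use Mp_in in auto)
  moreover have "set_lebesgue_integral lborel {0..t} (\<lambda>s. \<mu>m) = t * \<mu>m"
    using t by (subst set_integral_const) auto
  ultimately have "\<mu>m * t \<le> set_lebesgue_integral lborel {0..t} (\<lambda>s. Mp s \<omega>)" by (simp add: mult.commute)
  then show ?thesis unfolding discount_def by (simp add: algebra_simps)
qed

lemma discount_pos: "0 < discount \<rho> Mp t \<omega>"
  unfolding discount_def by simp

lemma fhat_bounds: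
  assumes M: "prob_space M" and U: "\<And>k. distributed M lborel (U k) (indicator {0<..<1})"
    and qp: "\<forall>n \<mu>. n + 1 \<le> N \<longrightarrow> \<mu> \<in> {\<mu>m..\<mu>M} \<longrightarrow>
        prob_space (q n \<mu>) \<and> sets (q n \<mu>) = sets borel \<and> emeasure (q n \<mu>) {\<mu>m..\<mu>M} = 1"
    and lz: "\<forall>i. N + 1 \<le> i \<longrightarrow> lam i = 0"
    and mM: "\<mu>m \<le> \<mu>M" and \<mu>m: "0 \<le> \<mu>m" and \<rho>: "0 < \<rho>" and h: "0 \<le> \<rho>h + \<mu>h"
    and \<mu>: "\<mu> \<in> {\<mu>m..\<mu>M}" and n: "n \<le> N"
  shows "0 \<le> fhat M lam q E U \<rho> \<rho>h \<mu>h n \<mu>" "fhat M lam q E U \<rho> \<rho>h \<mu>h n \<mu> \<le> (\<rho>h + \<mu>h) / \<rho>"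
proof -
  interpret prob_space M by fact
  define Mp where "Mp = chain_mu lam q E U n \<mu>"
  define I where "I \<omega> = set_lebesgue_integral lborel {0..} (\<lambda>u. discount \<rho> Mp u \<omega>)" for \<omega>
  have Inn: "0 \<le> I \<omega>" for \<omega>
    unfolding I_def set_lebesgue_integral_def
    by (rule Bochner_Integration.integral_nonneg) (auto simp: discount_pos less_imp_le)
  have Ile: "I \<omega> \<le> 1 / \<rho>" if good: "\<forall>k. U k \<omega> \<in> {0<..<1}" for \<omega>
  proof -
    have Mp_in: "Mp s \<omega> \<in> {\<mu>m..\<mu>M}" for s
      unfolding Mp_def by (rule chain_mu_in[where U=U and \<omega>=\<omega> and q=q and lam=lam and E=E, OF qp lz mM \<mu> n good])
    have Mp_m: "(\<lambda>s. Mp s \<omega>) \<in> borel_measurable borel"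
      unfolding Mp_def by (rule chain_mu_measurable[OF lz n])
    have "ennreal (I \<omega>) \<le> (\<integral>\<^sup>+u. ennreal (indicator {0..} u *\<^sub>R discount \<rho> Mp u \<omega>) \<partial>lborel)"
      unfolding I_def set_lebesgue_integral_def by (rule ennreal_integral_le_nn)
    also have "\<dots> \<le> (\<integral>\<^sup>+u. indicator {0..} u * ennreal (exp (- \<rho> * u)) \<partial>lborel)"
    proof (intro nn_integral_mono)
      fix u :: real
      show "ennreal (indicator {0..} u *\<^sub>R discount \<rho> Mp u \<omega>) \<le> indicator {0..} u * ennreal (exp (- \<rho> * u))"
      proof (cases "0 \<le> u")
        case True
        have "discount \<rho> Mp u \<omega> \<le> exp (- (\<rho> + \<mu>m) * u)" by (rule discount_bound[where Mp=Mp and \<omega>=\<omega>, OF Mp_in Mp_m True])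
        also have "\<dots> \<le> exp (- \<rho> * u)" using True \<mu>m by (simp add: algebra_simps mult_nonneg_nonneg)
        finally show ?thesis using True by (simp add: ennreal_leI)
      qed simp
    qed
    also have "\<dots> = ennreal (1 / \<rho>)" by (rule nn_integral_exp_neg[OF \<rho>])
    finally show ?thesis using \<rho> by (simp add: ennreal_le_iff)
  qed
  have AEg: "AE \<omega> in M. \<forall>k. U k \<omega> \<in> {0<..<1::real}" by (rule AE_U_good[OF M U])
  have "integral\<^sup>L M I \<le> 1 / \<rho>"
  proof (rule integral_real_bounded)
    have "(\<integral>\<^sup>+\<omega>. ennreal (I \<omega>) \<partial>M) \<le> (\<integral>\<^sup>+\<omega>. ennreal (1 / \<rho>) \<partial>M)"
      by (rule nn_integral_mono_AE) (use AEg Ile in \<open>auto simp: ennreal_leI\<close>)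
    also have "\<dots> = ennreal (1 / \<rho>)" by (simp add: emeasure_space_1)
    finally show "(\<integral>\<^sup>+\<omega>. ennreal (I \<omega>) \<partial>M) \<le> ennreal (1 / \<rho>)" .
  qed (use \<rho> in simp)
  moreover have "0 \<le> integral\<^sup>L M I" by (rule Bochner_Integration.integral_nonneg) (rule Inn)
  ultimately show "0 \<le> fhat M lam q E U \<rho> \<rho>h \<mu>h n \<mu>" "fhat M lam q E U \<rho> \<rho>h \<mu>h n \<mu> \<le> (\<rho>h + \<mu>h) / \<rho>"
    unfolding fhat_def I_def[symmetric] Mp_def[symmetric] using h
    by (auto simp: mult_left_mono[of _ "1/\<rho>", simplified])
qed

lemma ennreal_add_le: "0 \<le> a \<Longrightarrow> ennreal (a + b) \<le> ennreal a + ennreal b"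
proof (cases "0 \<le> b")
  case False
  assume a: "0 \<le> a"
  have "ennreal (a + b) \<le> ennreal a" using False by (intro ennreal_leI) simp
  also have "\<dots> \<le> ennreal a + ennreal b" by simp
  finally show ?thesis .
qed simp

lemma gbm_disc:
  assumes "c1 = \<theta> - \<alpha> - \<sigma>\<^sup>2 / 2 - \<delta> + \<epsilon>"
  shows "exp (- \<delta> * t) * gbm \<theta> \<alpha> \<sigma> x B t \<omega> = x * exp (- \<epsilon> * t) * exp (c1 * t + \<sigma> * B t \<omega>)"
proof -
  have "exp (- \<delta> * t) * gbm \<theta> \<alpha> \<sigma> x B t \<omega> = x * exp (- \<delta> * t + ((\<theta> - \<alpha> - \<sigma>\<^sup>2 / 2) * t + \<sigma> * B t \<omega>))"
    unfolding gbm_def exp_add by simp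
  also have "- \<delta> * t + ((\<theta> - \<alpha> - \<sigma>\<^sup>2 / 2) * t + \<sigma> * B t \<omega>) = - \<epsilon> * t + (c1 * t + \<sigma> * B t \<omega>)"
    unfolding assms by (simp add: algebra_simps)
  also have "x * exp (- \<epsilon> * t + (c1 * t + \<sigma> * B t \<omega>)) = x * exp (- \<epsilon> * t) * exp (c1 * t + \<sigma> * B t \<omega>)"
    by (simp only: exp_add mult.assoc)
  finally show ?thesis .
qed

lemma integral_bound:
  fixes M :: "'a measure" and B :: "real \<Rightarrow> 'a \<Rightarrow> real"
    and E U :: "nat \<Rightarrow> 'a \<Rightarrow> real" and \<tau> :: "'a \<Rightarrow> ennreal"
  assumes M: "prob_space M" and BM: "std_brownian_motion M B"
    and U_unif: "\<And>k. distributed M lborel (U k) (indicator {0<..<1})"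
    and qp: "\<forall>n \<mu>. n + 1 \<le> N \<longrightarrow> \<mu> \<in> {\<mu>m..\<mu>M} \<longrightarrow>
        prob_space (q n \<mu>) \<and> sets (q n \<mu>) = sets borel \<and> emeasure (q n \<mu>) {\<mu>m..\<mu>M} = 1"
    and lz: "\<forall>i. N + 1 \<le> i \<longrightarrow> lam i = 0"
    and \<alpha>: "0 \<le> \<alpha>" and \<sigma>: "0 < \<sigma>" and \<rho>: "0 < \<rho>"
    and \<nu>: "0 \<le> \<nu>" "\<nu> \<le> 1" and h: "0 \<le> \<rho>h + \<mu>h"
    and \<mu>m: "0 < \<mu>m" and mM: "\<mu>m \<le> \<mu>M"
    and cond: "\<theta> - \<alpha> - \<rho> - \<mu>m < 0"
    and n: "n \<le> N" and \<mu>: "\<mu> \<in> {\<mu>m..\<mu>M}" and x: "0 < x"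
  defines "\<delta> \<equiv> \<rho> + \<mu>m"
  defines "\<epsilon> \<equiv> - (\<theta> - \<alpha> - \<rho> - \<mu>m) / 2"
  defines "c1 \<equiv> \<theta> - \<alpha> - \<sigma>\<^sup>2 / 2 - \<delta> + \<epsilon>"
  defines "CW \<equiv> 2 * exp (\<sigma>\<^sup>2 / 2) / (1 - exp (c1 + \<sigma>\<^sup>2 / 2))"
  defines "Fb \<equiv> (\<rho>h + \<mu>h) / \<rho>"
  shows "(\<integral>\<omega>. set_lebesgue_integral lborel {t. 0 \<le> t \<and> ennreal t < \<tau> \<omega>}
             (\<lambda>t. discount \<rho> (chain_mu lam q E U n \<mu>) t \<omega> * (\<alpha> + \<nu> * chain_mu lam q E U n \<mu> t \<omega>) * gbm \<theta> \<alpha> \<sigma> x B t \<omega>)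
         + (if \<tau> \<omega> = \<infinity> then 0 else
              discount \<rho> (chain_mu lam q E U n \<mu>) (enn2real (\<tau> \<omega>)) \<omega> *
              fhat M lam q E U \<rho> \<rho>h \<mu>h (chain_n lam E n (enn2real (\<tau> \<omega>)) \<omega>) (chain_mu lam q E U n \<mu> (enn2real (\<tau> \<omega>)) \<omega>) *
              (gbm \<theta> \<alpha> \<sigma> x B (enn2real (\<tau> \<omega>)) \<omega> - K))
         \<partial>completion M) \<le> ((\<alpha> + \<mu>M) * x / \<epsilon> + Fb * x) * CW + Fb * \<bar>K\<bar>"
proof -
  interpret prob_space M by fact
  define Mp where "Mp = chain_mu lam q E U n \<mu>"
  define Np where "Np = chain_n lam E n"
  define X where "X = gbm \<theta> \<alpha> \<sigma> x B"
  define W where "W = Wsum c1 \<sigma> B"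
  have \<epsilon>: "0 < \<epsilon>" using cond by (simp add: \<epsilon>_def)
  have s2: "0 \<le> \<sigma>\<^sup>2" by simp
  have c1e: "c1 = (\<theta> - \<alpha> - \<rho> - \<mu>m) / 2 - \<sigma>\<^sup>2 / 2"
    by (simp add: c1_def \<epsilon>_def \<delta>_def field_simps)
  have c1x: "c1 + \<sigma>\<^sup>2 / 2 = (\<theta> - \<alpha> - \<rho> - \<mu>m) / 2" by (simp add: c1e)
  have c1a: "c1 + \<sigma>\<^sup>2 / 2 < 0"
    unfolding c1x using cond by simp
  have c1b: "c1 \<le> 0"
  proof -
    have "c1 \<le> c1 + \<sigma>\<^sup>2 / 2" by simp
    also have "\<dots> \<le> 0" using c1a by (rule less_imp_le)
    finally show ?thesis .
  qed
  note c1 = c1a c1b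
  have Wm: "W \<in> borel_measurable M" unfolding W_def by (rule Wsum_bound(1)[OF M BM \<sigma> c1(1)])
  have WI: "(\<integral>\<^sup>+\<omega>. W \<omega> \<partial>M) \<le> ennreal CW" unfolding W_def CW_def by (rule Wsum_bound(2)[OF M BM \<sigma> c1(1)])
  have CW: "0 \<le> CW" using c1 by (simp add: CW_def)
  have Fb: "0 \<le> Fb" using h \<rho> by (simp add: Fb_def)
  have muM: "0 \<le> \<mu>M" using \<mu>m mM by simp
  define g where "g \<omega> t = discount \<rho> Mp t \<omega> * (\<alpha> + \<nu> * Mp t \<omega>) * X t \<omega>" for \<omega> t
  define inner where "inner \<omega> = set_lebesgue_integral lborel {t. 0 \<le> t \<and> ennreal t < \<tau> \<omega>} (g \<omega>)" for \<omega>
  define trm where "trm \<omega> = (if \<tau> \<omega> = \<infinity> then 0 else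
              discount \<rho> Mp (enn2real (\<tau> \<omega>)) \<omega> *
              fhat M lam q E U \<rho> \<rho>h \<mu>h (Np (enn2real (\<tau> \<omega>)) \<omega>) (Mp (enn2real (\<tau> \<omega>)) \<omega>) *
              (X (enn2real (\<tau> \<omega>)) \<omega> - K))" for \<omega>
  have pw: "ennreal (inner \<omega> + trm \<omega>) \<le> ennreal ((\<alpha> + \<mu>M) * x / \<epsilon>) * W \<omega> + (ennreal (Fb * x) * W \<omega> + ennreal (Fb * \<bar>K\<bar>))"
    if good: "\<forall>k. U k \<omega> \<in> {0<..<1}" for \<omega>
  proof -
    have Mp_in: "Mp s \<omega> \<in> {\<mu>m..\<mu>M}" for s
      unfolding Mp_def by (rule chain_mu_in[where U=U and \<omega>=\<omega> and q=q and lam=lam and E=E, OF qp lz mM \<mu> n good])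
    have Mp_m: "(\<lambda>s. Mp s \<omega>) \<in> borel_measurable borel"
      unfolding Mp_def by (rule chain_mu_measurable[OF lz n])
    have disc: "discount \<rho> Mp t \<omega> \<le> exp (- \<delta> * t)" if "0 \<le> t" for t
      unfolding \<delta>_def by (rule discount_bound[where Mp=Mp and \<omega>=\<omega>, OF Mp_in Mp_m that])
    have Xpos: "0 < X t \<omega>" for t using x by (simp add: X_def gbm_def)
    have Xf: "exp (- \<delta> * t) * X t \<omega> = x * exp (- \<epsilon> * t) * exp (c1 * t + \<sigma> * B t \<omega>)" for t
      unfolding X_def by (rule gbm_disc) (simp add: c1_def)
    have Zle: "ennreal (exp (c1 * t + \<sigma> * B t \<omega>)) \<le> W \<omega>" if "0 \<le> t" for t
      unfolding W_def by (rule supZ_le_Wsum[OF c1(2) that])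
    have gnn: "0 \<le> g \<omega> t" for t
      using Mp_in[of t] \<mu>m \<nu> \<alpha> Xpos[of t] discount_pos[of \<rho> Mp t \<omega>] unfolding g_def
      by (intro mult_nonneg_nonneg) auto
    have gle: "g \<omega> t \<le> (\<alpha> + \<mu>M) * x * exp (- \<epsilon> * t) * exp (c1 * t + \<sigma> * B t \<omega>)" if t: "0 \<le> t" for t
    proof -
      have a1: "0 \<le> \<alpha> + \<nu> * Mp t \<omega>" using Mp_in[of t] \<mu>m \<nu> \<alpha> by auto
      have a2: "\<alpha> + \<nu> * Mp t \<omega> \<le> \<alpha> + \<mu>M"
      proof -
        have "\<nu> * Mp t \<omega> \<le> 1 * Mp t \<omega>" using Mp_in[of t] \<mu>m \<nu> by (intro mult_right_mono) auto
        then show ?thesis using Mp_in[of t] by simp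
      qed
      have "g \<omega> t \<le> exp (- \<delta> * t) * (\<alpha> + \<mu>M) * X t \<omega>"
        unfolding g_def using disc[OF t] a1 a2 Xpos[of t] discount_pos[of \<rho> Mp t \<omega>]
        by (intro mult_right_mono mult_mono) auto
      also have "\<dots> = (\<alpha> + \<mu>M) * (exp (- \<delta> * t) * X t \<omega>)" by simp
      also have "\<dots> = (\<alpha> + \<mu>M) * x * exp (- \<epsilon> * t) * exp (c1 * t + \<sigma> * B t \<omega>)" by (subst Xf) (simp only: mult.assoc)
      finally show ?thesis .
    qed
    have inn: "0 \<le> inner \<omega>"
      unfolding inner_def set_lebesgue_integral_def
      by (rule Bochner_Integration.integral_nonneg) (simp add: gnn)
    have "ennreal (inner \<omega>) \<le> (\<integral>\<^sup>+t. ennreal (indicator {t. 0 \<le> t \<and> ennreal t < \<tau> \<omega>} t *\<^sub>R g \<omega> t) \<partial>lborel)"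
      unfolding inner_def set_lebesgue_integral_def by (rule ennreal_integral_le_nn)
    also have "\<dots> \<le> (\<integral>\<^sup>+t. (ennreal ((\<alpha> + \<mu>M) * x) * W \<omega>) * (indicator {0..} t * ennreal (exp (- \<epsilon> * t))) \<partial>lborel)"
    proof (intro nn_integral_mono)
      fix t :: real
      show "ennreal (indicator {t. 0 \<le> t \<and> ennreal t < \<tau> \<omega>} t *\<^sub>R g \<omega> t)
          \<le> (ennreal ((\<alpha> + \<mu>M) * x) * W \<omega>) * (indicator {0..} t * ennreal (exp (- \<epsilon> * t)))"
      proof (cases "0 \<le> t")
        case True
        have "ennreal (indicator {t. 0 \<le> t \<and> ennreal t < \<tau> \<omega>} t *\<^sub>R g \<omega> t) \<le> ennreal (g \<omega> t)"
          using gnn[of t] by (intro ennreal_leI) (auto simp: indicator_def)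
        also have "\<dots> \<le> ennreal ((\<alpha> + \<mu>M) * x * exp (- \<epsilon> * t) * exp (c1 * t + \<sigma> * B t \<omega>))"
          by (rule ennreal_leI[OF gle[OF True]])
        also have "\<dots> = ennreal ((\<alpha> + \<mu>M) * x) * ennreal (exp (- \<epsilon> * t)) * ennreal (exp (c1 * t + \<sigma> * B t \<omega>))"
          using \<alpha> muM x by (simp add: ennreal_mult)
        also have "\<dots> \<le> ennreal ((\<alpha> + \<mu>M) * x) * ennreal (exp (- \<epsilon> * t)) * W \<omega>"
          by (intro mult_left_mono Zle[OF True]) auto
        also have "\<dots> = (ennreal ((\<alpha> + \<mu>M) * x) * W \<omega>) * (indicator {0..} t * ennreal (exp (- \<epsilon> * t)))"
          using True by (simp add: mult_ac)
        finally show ?thesis .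
      next
        case False
        then show ?thesis by simp
      qed
    qed
    also have "\<dots> = (ennreal ((\<alpha> + \<mu>M) * x) * W \<omega>) * (\<integral>\<^sup>+t. indicator {0..} t * ennreal (exp (- \<epsilon> * t)) \<partial>lborel)"
      by (rule nn_integral_cmult) measurable
    also have "\<dots> = (ennreal ((\<alpha> + \<mu>M) * x) * W \<omega>) * ennreal (1 / \<epsilon>)"
      by (subst nn_integral_exp_neg[OF \<epsilon>]) (rule refl)
    also have "\<dots> = ennreal ((\<alpha> + \<mu>M) * x / \<epsilon>) * W \<omega>"
      using \<alpha> muM x \<epsilon> by (simp add: ennreal_mult[symmetric] mult_ac)
    finally have I1: "ennreal (inner \<omega>) \<le> ennreal ((\<alpha> + \<mu>M) * x / \<epsilon>) * W \<omega>" .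
    have I2: "ennreal (trm \<omega>) \<le> ennreal (Fb * x) * W \<omega> + ennreal (Fb * \<bar>K\<bar>)"
    proof (cases "\<tau> \<omega> = \<infinity>")
      case True
      then show ?thesis by (simp add: trm_def)
    next
      case False
      define T where "T = enn2real (\<tau> \<omega>)"
      have T: "0 \<le> T" by (simp add: T_def)
      define d where "d = discount \<rho> Mp T \<omega>"
      define F' where "F' = fhat M lam q E U \<rho> \<rho>h \<mu>h (Np T \<omega>) (Mp T \<omega>)"
      have tm: "trm \<omega> = d * F' * (X T \<omega> - K)"
        using False by (simp add: trm_def T_def d_def F'_def)
      have Np: "Np T \<omega> \<le> N" unfolding Np_def by (rule chain_n_le[OF lz n])
      have F': "0 \<le> F'" "F' \<le> Fb"
        unfolding F'_def Fb_def
        by (rule fhat_bounds[OF M U_unif qp lz mM less_imp_le[OF \<mu>m] \<rho> h Mp_in Np])+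
      have d: "0 < d" "d \<le> exp (- \<delta> * T)" unfolding d_def by (rule discount_pos, rule disc[OF T])
      have e1: "exp (- \<delta> * T) \<le> 1"
        using T \<rho> \<mu>m by (simp add: \<delta>_def mult_nonpos_nonneg)
      have d1: "d \<le> 1" using d(2) e1 by (rule order.trans)
      have Z: "0 < exp (c1 * T + \<sigma> * B T \<omega>)" by simp
      have "trm \<omega> \<le> d * F' * X T \<omega> + d * F' * \<bar>K\<bar>"
      proof -
        have p: "0 \<le> d * F'" using d F' by simp
        have "d * F' * (- K) \<le> d * F' * \<bar>K\<bar>" by (rule mult_left_mono[OF abs_ge_minus_self p])
        then show ?thesis unfolding tm by (simp add: algebra_simps)
      qed
      also have "d * F' * X T \<omega> \<le> Fb * (exp (- \<delta> * T) * X T \<omega>)"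
      proof -
        have "d * F' \<le> exp (- \<delta> * T) * Fb"
          by (rule mult_mono) (use d F' in auto)
        then have "d * F' * X T \<omega> \<le> exp (- \<delta> * T) * Fb * X T \<omega>"
          using Xpos[of T] by (intro mult_right_mono) auto
        then show ?thesis by (simp add: mult_ac)
      qed
      also have "exp (- \<delta> * T) * X T \<omega> = x * exp (- \<epsilon> * T) * exp (c1 * T + \<sigma> * B T \<omega>)" by (rule Xf)
      also have "\<dots> \<le> x * exp (c1 * T + \<sigma> * B T \<omega>)"
        using x T \<epsilon> by (intro mult_right_mono) (auto simp: mult_nonneg_nonneg)
      also have "d * F' * \<bar>K\<bar> \<le> Fb * \<bar>K\<bar>"
      proof (rule mult_right_mono)
        have "d * F' \<le> 1 * Fb" by (rule mult_mono) (use d d1 F' in auto)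
        then show "d * F' \<le> Fb" by simp
      qed simp
      finally have tle: "trm \<omega> \<le> Fb * (x * exp (c1 * T + \<sigma> * B T \<omega>)) + Fb * \<bar>K\<bar>"
        using Fb by (simp add: mult_left_mono)
      have "ennreal (trm \<omega>) \<le> ennreal (Fb * x * exp (c1 * T + \<sigma> * B T \<omega>) + Fb * \<bar>K\<bar>)"
        using tle by (intro ennreal_leI) (simp add: mult.assoc)
      also have "\<dots> = ennreal (Fb * x) * ennreal (exp (c1 * T + \<sigma> * B T \<omega>)) + ennreal (Fb * \<bar>K\<bar>)"
        using Fb x by (simp add: ennreal_mult ennreal_plus)
      also have "\<dots> \<le> ennreal (Fb * x) * W \<omega> + ennreal (Fb * \<bar>K\<bar>)"
        by (intro add_right_mono mult_left_mono Zle[OF T]) auto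
      finally show ?thesis .
    qed
    have "ennreal (inner \<omega> + trm \<omega>) \<le> ennreal (inner \<omega>) + ennreal (trm \<omega>)"
      by (rule ennreal_add_le[OF inn])
    also have "\<dots> \<le> ennreal ((\<alpha> + \<mu>M) * x / \<epsilon>) * W \<omega> + (ennreal (Fb * x) * W \<omega> + ennreal (Fb * \<bar>K\<bar>))"
      by (rule add_mono[OF I1 I2])
    finally show ?thesis .
  qed
  have AEg: "AE \<omega> in M. \<forall>k. U k \<omega> \<in> {0<..<1::real}" by (rule AE_U_good[OF M U_unif])
  have "(\<integral>\<^sup>+\<omega>. ennreal (inner \<omega> + trm \<omega>) \<partial>completion M) = (\<integral>\<^sup>+\<omega>. ennreal (inner \<omega> + trm \<omega>) \<partial>M)"
    by (rule nn_integral_completion)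
  also have "\<dots> \<le> (\<integral>\<^sup>+\<omega>. ennreal ((\<alpha> + \<mu>M) * x / \<epsilon>) * W \<omega> + (ennreal (Fb * x) * W \<omega> + ennreal (Fb * \<bar>K\<bar>)) \<partial>M)"
    by (rule nn_integral_mono_AE) (use AEg pw in auto)
  also have "\<dots> = ennreal ((\<alpha> + \<mu>M) * x / \<epsilon>) * (\<integral>\<^sup>+\<omega>. W \<omega> \<partial>M) + (ennreal (Fb * x) * (\<integral>\<^sup>+\<omega>. W \<omega> \<partial>M) + ennreal (Fb * \<bar>K\<bar>))"
    using Wm by (simp add: nn_integral_add nn_integral_cmult emeasure_space_1)
  also have "\<dots> \<le> ennreal ((\<alpha> + \<mu>M) * x / \<epsilon>) * ennreal CW + (ennreal (Fb * x) * ennreal CW + ennreal (Fb * \<bar>K\<bar>))"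
    by (intro add_mono mult_left_mono WI order.refl) auto
  also have "\<dots> = ennreal (((\<alpha> + \<mu>M) * x / \<epsilon> + Fb * x) * CW + Fb * \<bar>K\<bar>)"
  proof -
    have a: "0 \<le> (\<alpha> + \<mu>M) * x / \<epsilon>" using \<alpha> muM x \<epsilon> by simp
    have b: "0 \<le> Fb * x" using Fb x by simp
    have c: "0 \<le> Fb * \<bar>K\<bar>" using Fb by simp
    have "ennreal ((\<alpha> + \<mu>M) * x / \<epsilon>) * ennreal CW + (ennreal (Fb * x) * ennreal CW + ennreal (Fb * \<bar>K\<bar>))
        = ennreal ((\<alpha> + \<mu>M) * x / \<epsilon> * CW) + (ennreal (Fb * x * CW) + ennreal (Fb * \<bar>K\<bar>))"
      using ennreal_mult[OF a CW] ennreal_mult[OF b CW] by simp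
    also have "\<dots> = ennreal ((\<alpha> + \<mu>M) * x / \<epsilon> * CW + (Fb * x * CW + Fb * \<bar>K\<bar>))"
    proof -
      have p1: "ennreal (Fb * x * CW) + ennreal (Fb * \<bar>K\<bar>) = ennreal (Fb * x * CW + Fb * \<bar>K\<bar>)"
        by (rule ennreal_plus[symmetric]) (use b c CW mult_nonneg_nonneg[OF b CW] in auto)
      have p2: "ennreal ((\<alpha> + \<mu>M) * x / \<epsilon> * CW) + ennreal (Fb * x * CW + Fb * \<bar>K\<bar>)
          = ennreal ((\<alpha> + \<mu>M) * x / \<epsilon> * CW + (Fb * x * CW + Fb * \<bar>K\<bar>))"
        by (rule ennreal_plus[symmetric]) (use a b c CW mult_nonneg_nonneg[OF a CW] mult_nonneg_nonneg[OF b CW] in auto)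
      show ?thesis by (simp only: p1 p2)
    qed
    also have "(\<alpha> + \<mu>M) * x / \<epsilon> * CW + (Fb * x * CW + Fb * \<bar>K\<bar>) = ((\<alpha> + \<mu>M) * x / \<epsilon> + Fb * x) * CW + Fb * \<bar>K\<bar>"
      by (simp add: distrib_right)
    finally show ?thesis .
  qed
  finally have "(\<integral>\<^sup>+\<omega>. ennreal (inner \<omega> + trm \<omega>) \<partial>completion M) \<le> ennreal (((\<alpha> + \<mu>M) * x / \<epsilon> + Fb * x) * CW + Fb * \<bar>K\<bar>)" .
  then have "integral\<^sup>L (completion M) (\<lambda>\<omega>. inner \<omega> + trm \<omega>) \<le> ((\<alpha> + \<mu>M) * x / \<epsilon> + Fb * x) * CW + Fb * \<bar>K\<bar>"
    by (intro integral_real_bounded) (use \<alpha> muM x \<epsilon> Fb CW in auto)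
  then show ?thesis
    unfolding inner_def trm_def g_def Mp_def Np_def X_def .
qed

lemma inner_nonneg:
  assumes qp: "\<forall>n \<mu>. n + 1 \<le> N \<longrightarrow> \<mu> \<in> {\<mu>m..\<mu>M} \<longrightarrow>
        prob_space (q n \<mu>) \<and> sets (q n \<mu>) = sets borel \<and> emeasure (q n \<mu>) {\<mu>m..\<mu>M} = 1"
    and lz: "\<forall>i. N + 1 \<le> i \<longrightarrow> lam i = 0"
    and \<alpha>: "0 \<le> \<alpha>" and \<nu>: "0 \<le> \<nu>" and \<mu>m: "0 < \<mu>m" and mM: "\<mu>m \<le> \<mu>M"
    and n: "n \<le> N" and \<mu>: "\<mu> \<in> {\<mu>m..\<mu>M}" and x: "0 < x"
    and good: "\<forall>k. U k \<omega> \<in> {0<..<1}"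
  shows "0 \<le> set_lebesgue_integral lborel A
      (\<lambda>t. discount \<rho> (chain_mu lam q E U n \<mu>) t \<omega> * (\<alpha> + \<nu> * chain_mu lam q E U n \<mu> t \<omega>) * gbm \<theta> \<alpha> \<sigma> x B t \<omega>)"
  unfolding set_lebesgue_integral_def
proof (rule Bochner_Integration.integral_nonneg)
  fix t :: real
  have Mp_in: "chain_mu lam q E U n \<mu> t \<omega> \<in> {\<mu>m..\<mu>M}"
    by (rule chain_mu_in[where U=U and \<omega>=\<omega> and q=q and lam=lam and E=E, OF qp lz mM \<mu> n good])
  have "0 \<le> discount \<rho> (chain_mu lam q E U n \<mu>) t \<omega> * (\<alpha> + \<nu> * chain_mu lam q E U n \<mu> t \<omega>) * gbm \<theta> \<alpha> \<sigma> x B t \<omega>"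
    using Mp_in \<mu>m \<nu> \<alpha> x discount_pos[of \<rho> "chain_mu lam q E U n \<mu>" t \<omega>]
    by (intro mult_nonneg_nonneg) (auto simp: gbm_def)
  then show "0 \<le> indicator A t *\<^sub>R (discount \<rho> (chain_mu lam q E U n \<mu>) t \<omega> * (\<alpha> + \<nu> * chain_mu lam q E U n \<mu> t \<omega>) * gbm \<theta> \<alpha> \<sigma> x B t \<omega>)"
    by (simp add: indicator_def)
qed

theorem proposition5p1:
  fixes M :: "'a measure" and B :: "real \<Rightarrow> 'a \<Rightarrow> real"
    and E U :: "nat \<Rightarrow> 'a \<Rightarrow> real"
    and lam :: "nat \<Rightarrow> real" and q :: "nat \<Rightarrow> real \<Rightarrow> real measure" and N :: nat
    and \<theta> \<alpha> \<sigma> \<rho> \<nu> K \<rho>h \<mu>h \<mu>m \<mu>M :: real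
  assumes M: "prob_space M"
    and BM: "std_brownian_motion M B"
    and E_exp: "\<And>k. distributed M lborel (E k) (exponential_density 1)"
    and U_unif: "\<And>k. distributed M lborel (U k) (indicator {0<..<1})"
    and EU_indep: "prob_space.indep_vars M (\<lambda>_. borel) (case_sum E U) UNIV"
    and B_EU_indep: "prob_space.indep_set M
        (sigma_sets (space M) {B t -` A \<inter> space M | t A. 0 \<le> t \<and> A \<in> sets borel})
        (sigma_sets (space M) {case_sum E U i -` A \<inter> space M | i A. A \<in> sets borel})"
    and lam_nonneg: "\<And>i. 1 \<le> i \<Longrightarrow> i \<le> N \<Longrightarrow> 0 \<le> lam i"
    and lam_zero: "\<And>i. N + 1 \<le> i \<Longrightarrow> lam i = 0"
    and q_prob: "\<And>n \<mu>. n + 1 \<le> N \<Longrightarrow> \<mu> \<in> {\<mu>m..\<mu>M} \<Longrightarrow>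
        prob_space (q n \<mu>) \<and> sets (q n \<mu>) = sets borel \<and> emeasure (q n \<mu>) {\<mu>m..\<mu>M} = 1"
    and q_meas: "\<And>n A. n + 1 \<le> N \<Longrightarrow> A \<in> sets borel \<Longrightarrow>
        (\<lambda>\<mu>. emeasure (q n \<mu>) A) \<in> borel_measurable (restrict_space borel {\<mu>m..\<mu>M})"
    and \<theta>: "0 < \<theta>" and \<alpha>: "0 \<le> \<alpha>" and \<sigma>: "0 < \<sigma>" and \<rho>: "0 < \<rho>"
    and \<nu>: "0 \<le> \<nu>" "\<nu> \<le> 1" and \<rho>h: "0 < \<rho>h"
    and \<mu>m: "0 < \<mu>m" and \<mu>mM: "\<mu>m \<le> \<mu>M" and \<mu>h: "\<mu>h \<in> {\<mu>m..\<mu>M}"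
    and cond: "\<theta> - \<alpha> - \<rho> - \<mu>m < 0"
  shows "\<exists>L>0. \<forall>n \<le> N. \<forall>\<mu> \<in> {\<mu>m..\<mu>M}. \<forall>x>0.
     0 \<le> value_fn M B E U lam q \<theta> \<alpha> \<sigma> \<rho> \<nu> K \<rho>h \<mu>h x n \<mu> \<and>
     value_fn M B E U lam q \<theta> \<alpha> \<sigma> \<rho> \<nu> K \<rho>h \<mu>h x n \<mu> \<le> ereal (L * (1 + x))"
proof -
  interpret prob_space M by (rule M)
  have lz: "\<forall>i. N + 1 \<le> i \<longrightarrow> lam i = 0" using lam_zero by blast
  have qp: "\<forall>n \<mu>. n + 1 \<le> N \<longrightarrow> \<mu> \<in> {\<mu>m..\<mu>M} \<longrightarrow>
        prob_space (q n \<mu>) \<and> sets (q n \<mu>) = sets borel \<and> emeasure (q n \<mu>) {\<mu>m..\<mu>M} = 1"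
    using q_prob by blast
  have h: "0 \<le> \<rho>h + \<mu>h" using \<rho>h \<mu>h \<mu>m by auto
  define \<delta> where "\<delta> = \<rho> + \<mu>m"
  define \<epsilon> where "\<epsilon> = - (\<theta> - \<alpha> - \<rho> - \<mu>m) / 2"
  define c1 where "c1 = \<theta> - \<alpha> - \<sigma>\<^sup>2 / 2 - \<delta> + \<epsilon>"
  define CW where "CW = 2 * exp (\<sigma>\<^sup>2 / 2) / (1 - exp (c1 + \<sigma>\<^sup>2 / 2))"
  define Fb where "Fb = (\<rho>h + \<mu>h) / \<rho>"
  define L where "L = (\<alpha> + \<mu>M) / \<epsilon> * CW + Fb * CW + Fb * \<bar>K\<bar> + 1"
  have \<epsilon>: "0 < \<epsilon>" using cond by (simp add: \<epsilon>_def)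
  have c1e: "c1 = (\<theta> - \<alpha> - \<rho> - \<mu>m) / 2 - \<sigma>\<^sup>2 / 2"
    by (simp add: c1_def \<epsilon>_def \<delta>_def field_simps)
  have c1: "c1 + \<sigma>\<^sup>2 / 2 < 0"
    using cond by (simp add: c1e field_simps)
  have CW: "0 \<le> CW" using c1 by (simp add: CW_def)
  have Fb: "0 \<le> Fb" using h \<rho> by (simp add: Fb_def)
  have muM: "0 \<le> \<mu>M" using \<mu>m \<mu>mM by simp
  have A: "0 \<le> (\<alpha> + \<mu>M) / \<epsilon> * CW" using \<alpha> muM \<epsilon> CW by simp
  have L: "0 < L" unfolding L_def using A Fb CW by (simp add: add_nonneg_pos)
  have AEg: "AE \<omega> in M. \<forall>k. U k \<omega> \<in> {0<..<1::real}" by (rule AE_U_good[OF M U_unif])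
  show ?thesis
  proof (rule exI[of _ L], intro conjI allI impI ballI)
    show "0 < L" by (rule L)
  next
    fix n :: nat and \<mu> x :: real assume n: "n \<le> N" and \<mu>: "\<mu> \<in> {\<mu>m..\<mu>M}" and x: "0 < x"
    let ?f = "\<lambda>\<omega>. set_lebesgue_integral lborel {t. 0 \<le> t \<and> ennreal t < \<infinity>}
             (\<lambda>t. discount \<rho> (chain_mu lam q E U n \<mu>) t \<omega> * (\<alpha> + \<nu> * chain_mu lam q E U n \<mu> t \<omega>) * gbm \<theta> \<alpha> \<sigma> x B t \<omega>)"
    have "0 \<le> (\<integral>\<omega>. ?f \<omega> \<partial>completion M)"
    proof (rule integral_nonneg_AE)
      show "AE \<omega> in completion M. 0 \<le> ?f \<omega>"
      proof (rule AE_completion)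
        show "AE \<omega> in M. 0 \<le> ?f \<omega>"
          using AEg
        proof eventually_elim
          case (elim \<omega>)
          show ?case by (rule inner_nonneg[where U=U and \<omega>=\<omega> and q=q and lam=lam and E=E, OF qp lz \<alpha> \<nu>(1) \<mu>m \<mu>mM n \<mu> x elim])
        qed
      qed
    qed
    also have "ereal (\<integral>\<omega>. ?f \<omega> \<partial>completion M) \<le> value_fn M B E U lam q \<theta> \<alpha> \<sigma> \<rho> \<nu> K \<rho>h \<mu>h x n \<mu>"
      unfolding value_fn_def Let_def
      by (rule SUP_upper2[where i="\<lambda>_. \<infinity>"]) (simp_all add: stopping_time_const)
    finally show "0 \<le> value_fn M B E U lam q \<theta> \<alpha> \<sigma> \<rho> \<nu> K \<rho>h \<mu>h x n \<mu>" by (simp add: zero_ereal_def)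
  next
    fix n :: nat and \<mu> x :: real assume n: "n \<le> N" and \<mu>: "\<mu> \<in> {\<mu>m..\<mu>M}" and x: "0 < x"
    have bnd: "((\<alpha> + \<mu>M) * x / \<epsilon> + Fb * x) * CW + Fb * \<bar>K\<bar> \<le> L * (1 + x)"
    proof -
      have "((\<alpha> + \<mu>M) * x / \<epsilon> + Fb * x) * CW + Fb * \<bar>K\<bar> = x * ((\<alpha> + \<mu>M) / \<epsilon> * CW + Fb * CW) + Fb * \<bar>K\<bar>"
        by (simp add: algebra_simps)
      also have "x * ((\<alpha> + \<mu>M) / \<epsilon> * CW + Fb * CW) \<le> x * L"
        using x A Fb CW by (intro mult_left_mono) (auto simp: L_def)
      also have "Fb * \<bar>K\<bar> \<le> L" using A Fb CW by (simp add: L_def)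
      finally show ?thesis by (simp add: algebra_simps)
    qed
    show "value_fn M B E U lam q \<theta> \<alpha> \<sigma> \<rho> \<nu> K \<rho>h \<mu>h x n \<mu> \<le> ereal (L * (1 + x))"
      unfolding value_fn_def Let_def
    proof (rule SUP_least)
      fix \<tau> :: "'a \<Rightarrow> ennreal"
      have "(\<integral>\<omega>. set_lebesgue_integral lborel {t. 0 \<le> t \<and> ennreal t < \<tau> \<omega>}
             (\<lambda>t. discount \<rho> (chain_mu lam q E U n \<mu>) t \<omega> * (\<alpha> + \<nu> * chain_mu lam q E U n \<mu> t \<omega>) * gbm \<theta> \<alpha> \<sigma> x B t \<omega>)
         + (if \<tau> \<omega> = \<infinity> then 0 else
              discount \<rho> (chain_mu lam q E U n \<mu>) (enn2real (\<tau> \<omega>)) \<omega> *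
              fhat M lam q E U \<rho> \<rho>h \<mu>h (chain_n lam E n (enn2real (\<tau> \<omega>)) \<omega>) (chain_mu lam q E U n \<mu> (enn2real (\<tau> \<omega>)) \<omega>) *
              (gbm \<theta> \<alpha> \<sigma> x B (enn2real (\<tau> \<omega>)) \<omega> - K))
         \<partial>completion M) \<le> ((\<alpha> + \<mu>M) * x / \<epsilon> + Fb * x) * CW + Fb * \<bar>K\<bar>"
        unfolding \<epsilon>_def CW_def Fb_def c1_def \<delta>_def
        by (rule integral_bound[OF M BM U_unif qp lz \<alpha> \<sigma> \<rho> \<nu> h \<mu>m \<mu>mM cond n \<mu> x])
      also note bnd
      finally show "ereal (\<integral>\<omega>. set_lebesgue_integral lborel {t. 0 \<le> t \<and> ennreal t < \<tau> \<omega>}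
             (\<lambda>t. discount \<rho> (chain_mu lam q E U n \<mu>) t \<omega> * (\<alpha> + \<nu> * chain_mu lam q E U n \<mu> t \<omega>) * gbm \<theta> \<alpha> \<sigma> x B t \<omega>)
         + (if \<tau> \<omega> = \<infinity> then 0 else
              discount \<rho> (chain_mu lam q E U n \<mu>) (enn2real (\<tau> \<omega>)) \<omega> *
              fhat M lam q E U \<rho> \<rho>h \<mu>h (chain_n lam E n (enn2real (\<tau> \<omega>)) \<omega>) (chain_mu lam q E U n \<mu> (enn2real (\<tau> \<omega>)) \<omega>) *
              (gbm \<theta> \<alpha> \<sigma> x B (enn2real (\<tau> \<omega>)) \<omega> - K))
         \<partial>completion M) \<le> ereal (L * (1 + x))" by simp
    qed
  qed
qed

end
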